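(* Let $\Omega\subset\mathbb{R}^2$ be a bounded domain, and let $S_1,S_2\subset\Omega$. Let $u\in C^{0}(\bar\Omega\setminus S_1)$, $v\in C^0(\bar\Omega\setminus S_2)$, let $S(u)\subset\Omega\setminus S_1$ (resp. $S(v)\subset\Omega\setminus S_2$) be the set of points where $u_x-y=0=u_y+x$ (resp. $v_x-y=0=v_y+x$), and let $S=S_1\cup S_2\cup S(u)\cup S(v)$. Assume $u,v\in C^2(\Omega\setminus S)$ and $\mathcal{H}_1(\bar S)=0$, where $\mathcal H_1$ is the 1-dimensional Hausdorff measure. For $w\in\{u,v\}$ put $N(w)=(w_x-y,w_y+x)/\sqrt{(w_x-y)^2+(w_y+x)^2}$ on $\Omega\setminus S$. Suppose $\operatorname{div}N(u)\ge\operatorname{div}N(v)$ in $\Omega\setminus S$ and $u\le v$ on $\partial\Omega\setminus S$. Then $N(u)=N(v)$ in $\Omega^+\setminus S$, where $\Omega^+=\{p\in\Omega: u(p)-v(p)>0\}$.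
   Context: $\operatorname{div}$ is the Euclidean divergence in the plane. *)

theory Defs
  imports "HOL-Analysis.Analysis"
begin

definition px :: "(real * real \<Rightarrow> real) \<Rightarrow> real * real \<Rightarrow> real" where
  "px f p = frechet_derivative f (at p) (1, 0)"

definition py :: "(real * real \<Rightarrow> real) \<Rightarrow> real * real \<Rightarrow> real" where
  "py f p = frechet_derivative f (at p) (0, 1)"

definition C2_on :: "(real * real) set \<Rightarrow> (real * real \<Rightarrow> real) \<Rightarrow> bool" where
  "C2_on A f \<longleftrightarrow>
     (\<forall>p\<in>A. f differentiable (at p) \<and> px f differentiable (at p) \<and> py f differentiable (at p)) \<and>
     continuous_on A (px (px f)) \<and> continuous_on A (py (px f)) \<and>
     continuous_on A (px (py f)) \<and> continuous_on A (py (py f))"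

definition sing_set :: "(real * real) set \<Rightarrow> (real * real) set \<Rightarrow> (real * real \<Rightarrow> real) \<Rightarrow> (real * real) set" where
  "sing_set \<Omega> S1 u = {p \<in> \<Omega> - S1. u differentiable (at p) \<and>
      px u p - snd p = 0 \<and> py u p + fst p = 0}"

definition Nfield :: "(real * real \<Rightarrow> real) \<Rightarrow> real * real \<Rightarrow> real * real" where
  "Nfield w p = (let P = px w p - snd p; Q = py w p + fst p; r = sqrt (P\<^sup>2 + Q\<^sup>2)
                 in (P / r, Q / r))"

definition div2 :: "(real * real \<Rightarrow> real * real) \<Rightarrow> real * real \<Rightarrow> real" where
  "div2 F p = px (\<lambda>q. fst (F q)) p + py (\<lambda>q. snd (F q)) p"

definition hausdorff1_delta :: "real \<Rightarrow> (real * real) set \<Rightarrow> ennreal" where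
  "hausdorff1_delta \<delta> E =
     (INF C \<in> {C :: nat \<Rightarrow> (real * real) set. E \<subseteq> (\<Union>n. C n) \<and>
                 (\<forall>n. bounded (C n) \<and> diameter (C n) \<le> \<delta>)}.
        (\<Sum>n. ennreal (diameter (C n))))"

definition hausdorff1 :: "(real * real) set \<Rightarrow> ennreal" where
  "hausdorff1 E = (SUP \<delta> \<in> {0<..}. hausdorff1_delta \<delta> E)"

end

theory Submission
  imports Defs
begin

lemma fd_eq: "(f has_derivative D) (at q) \<Longrightarrow> frechet_derivative f (at q) = D"
  using frechet_derivative_at by metis

lemma fd_works: "f differentiable (at q) \<Longrightarrow> (f has_derivative frechet_derivative f (at q)) (at q)"
  using frechet_derivative_works by blast

lemma fd_local:
  assumes "open T" "q \<in> T" "\<And>y. y \<in> T \<Longrightarrow> f y = g y"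
  shows "frechet_derivative f (at q) = frechet_derivative g (at q)"
    and "f differentiable (at q) \<longleftrightarrow> g differentiable (at q)"
proof -
  have *: "(f has_derivative D) (at q) \<longleftrightarrow> (g has_derivative D) (at q)" for D
  proof
    assume "(f has_derivative D) (at q)"
    then show "(g has_derivative D) (at q)"
      using has_derivative_transform_within_open[of f D q UNIV T g] assms by auto
  next
    assume "(g has_derivative D) (at q)"
    then show "(f has_derivative D) (at q)"
      using has_derivative_transform_within_open[of g D q UNIV T f] assms by auto
  qed
  show "frechet_derivative f (at q) = frechet_derivative g (at q)"
    unfolding frechet_derivative_def using * by simp
  show "f differentiable (at q) \<longleftrightarrow> g differentiable (at q)"
    unfolding differentiable_def using * by simp
qed

lemma fd_add:
  fixes f g :: "real*real \<Rightarrow> real"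
  assumes "f differentiable (at q)" "g differentiable (at q)"
  shows "frechet_derivative (\<lambda>q. f q + g q) (at q) e = frechet_derivative f (at q) e + frechet_derivative g (at q) e"
  using fd_eq[OF has_derivative_add[OF fd_works[OF assms(1)] fd_works[OF assms(2)]]] by simp

lemma fd_diff:
  fixes f g :: "real*real \<Rightarrow> real"
  assumes "f differentiable (at q)" "g differentiable (at q)"
  shows "frechet_derivative (\<lambda>q. f q - g q) (at q) e = frechet_derivative f (at q) e - frechet_derivative g (at q) e"
  using fd_eq[OF has_derivative_diff[OF fd_works[OF assms(1)] fd_works[OF assms(2)]]] by simp

lemma fd_mult:
  fixes f g :: "real*real \<Rightarrow> real"
  assumes "f differentiable (at q)" "g differentiable (at q)"
  shows "frechet_derivative (\<lambda>q. f q * g q) (at q) e = frechet_derivative f (at q) e * g q + f q * frechet_derivative g (at q) e"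
  using fd_eq[OF has_derivative_mult[OF fd_works[OF assms(1)] fd_works[OF assms(2)]]] by simp

lemma fd_comp:
  fixes f :: "real*real \<Rightarrow> real" and k :: "real \<Rightarrow> real"
  assumes "DERIV k (f q) :> d" "f differentiable (at q)"
  shows "frechet_derivative (\<lambda>q. k (f q)) (at q) e = d * frechet_derivative f (at q) e"
    and "(\<lambda>q. k (f q)) differentiable (at q)"
  using fd_eq[OF DERIV_compose_FDERIV[OF assms(1) fd_works[OF assms(2)]]]
    DERIV_compose_FDERIV[OF assms(1) fd_works[OF assms(2)]]
  by (auto simp: differentiable_def)

lemma fd_fst: "frechet_derivative (\<lambda>q::real*real. fst q) (at q) e = fst e"
proof -
  have "frechet_derivative (\<lambda>q::real*real. fst q) (at q) = (\<lambda>q. fst q)"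
    by (rule fd_eq) (rule has_derivative_fst[OF has_derivative_ident])
  then show ?thesis by simp
qed
lemma fd_snd: "frechet_derivative (\<lambda>q::real*real. snd q) (at q) e = snd e"
proof -
  have "frechet_derivative (\<lambda>q::real*real. snd q) (at q) = (\<lambda>q. snd q)"
    by (rule fd_eq) (rule has_derivative_snd[OF has_derivative_ident])
  then show ?thesis by simp
qed
lemma fd_const: "frechet_derivative (\<lambda>q::real*real. c::real) (at q) e = 0"
  using fd_eq[OF has_derivative_const] by simp

lemma diff_fst: "(\<lambda>q::real*real. fst q) differentiable (at q)"
  using has_derivative_fst[OF has_derivative_ident] by (auto simp: differentiable_def)
lemma diff_snd: "(\<lambda>q::real*real. snd q) differentiable (at q)"
  using has_derivative_snd[OF has_derivative_ident] by (auto simp: differentiable_def)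

lemma line_x:
  fixes f :: "real*real \<Rightarrow> real"
  assumes "f differentiable (at (t,y))"
  shows "((\<lambda>t. f (t,y)) has_real_derivative px f (t,y)) (at t)"
proof -
  let ?D = "frechet_derivative f (at (t,y))"
  have lin: "linear ?D" using fd_works[OF assms] has_derivative_linear by blast
  have "((\<lambda>s. (s, y)) has_derivative (\<lambda>h. (h, 0))) (at t)"
    by (intro derivative_eq_intros) auto
  from has_derivative_compose[OF this fd_works[OF assms]]
  have "((\<lambda>s. f (s, y)) has_derivative (\<lambda>h. ?D (h, 0))) (at t)" by (simp add: o_def)
  moreover have "(\<lambda>h. ?D (h,0)) = (*) (px f (t,y))"
  proof
    fix h show "?D (h,0) = (px f (t,y)) * h"
      using linear_scale[OF lin, of h "(1,0)"] unfolding px_def by (simp add: mult.commute)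
  qed
  ultimately show ?thesis unfolding has_field_derivative_def by simp
qed

lemma line_y:
  fixes f :: "real*real \<Rightarrow> real"
  assumes "f differentiable (at (x,t))"
  shows "((\<lambda>t. f (x,t)) has_real_derivative py f (x,t)) (at t)"
proof -
  let ?D = "frechet_derivative f (at (x,t))"
  have lin: "linear ?D" using fd_works[OF assms] has_derivative_linear by blast
  have "((\<lambda>s. (x, s)) has_derivative (\<lambda>h. (0, h))) (at t)"
    by (intro derivative_eq_intros) auto
  from has_derivative_compose[OF this fd_works[OF assms]]
  have "((\<lambda>s. f (x, s)) has_derivative (\<lambda>h. ?D (0, h))) (at t)" by (simp add: o_def)
  moreover have "(\<lambda>h. ?D (0,h)) = (*) (py f (x,t))"
  proof
    fix h show "?D (0,h) = (py f (x,t)) * h"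
      using linear_scale[OF lin, of h "(0,1)"] unfolding py_def by (simp add: mult.commute)
  qed
  ultimately show ?thesis unfolding has_field_derivative_def by simp
qed

lemma ftc_line:
  fixes k :: "real \<Rightarrow> real"
  assumes "K > 0" "\<And>t. (k has_real_derivative k' t) (at t)" "k K = 0" "k (-K) = 0"
  shows "integral (cbox (-K) K) k' = 0"
proof -
  have "(k' has_integral (k K - k (-K))) {-K..K}"
    by (rule fundamental_theorem_of_calculus) (use assms in \<open>auto simp: has_real_derivative_iff_has_vector_derivative[symmetric] intro: has_field_derivative_at_within\<close>)
  then show ?thesis using assms by (simp add: integral_unique)
qed

lemma div_box_x:
  fixes f :: "real*real \<Rightarrow> real" and K :: real
  assumes "K > 0" "\<forall>q. f differentiable (at q)" "continuous_on UNIV (px f)"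
    "\<forall>q. q \<notin> box (-K,-K) (K,K) \<longrightarrow> f q = 0"
  shows "integral (cbox (-K,-K) (K,K)) (px f) = 0"
proof -
  have c: "continuous_on (cbox (-K,-K) (K,K)) (px f)"
    using assms(3) continuous_on_subset by blast
  have "integral (cbox (-K,-K) (K,K)) (px f) = integral (cbox (-K) K) (\<lambda>x. integral (cbox (-K) K) (\<lambda>y. px f (x, y)))"
    by (rule integral_prod_continuous[OF c])
  also have "\<dots> = integral (cbox (-K) K) (\<lambda>y. integral (cbox (-K) K) (\<lambda>x. px f (x, y)))"
    by (rule integral_swap_continuous[where f="\<lambda>x y. px f (x,y)"]) (use c in \<open>simp add: case_prod_beta'\<close>)
  also have "\<dots> = integral (cbox (-K) K) (\<lambda>y. 0)"
  proof (rule integral_cong)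
    fix y
    show "integral (cbox (-K) K) (\<lambda>x. px f (x, y)) = 0"
      apply (rule ftc_line[where k="\<lambda>x. f (x,y)"])
      using assms(1) apply simp
      using line_x assms(2) apply blast
      using assms(4) by (auto simp: mem_box Basis_prod_def)
  qed
  finally show ?thesis by simp
qed

lemma div_box_y:
  fixes f :: "real*real \<Rightarrow> real" and K :: real
  assumes "K > 0" "\<forall>q. f differentiable (at q)" "continuous_on UNIV (py f)"
    "\<forall>q. q \<notin> box (-K,-K) (K,K) \<longrightarrow> f q = 0"
  shows "integral (cbox (-K,-K) (K,K)) (py f) = 0"
proof -
  have c: "continuous_on (cbox (-K,-K) (K,K)) (py f)"
    using assms(3) continuous_on_subset by blast
  have "integral (cbox (-K,-K) (K,K)) (py f) = integral (cbox (-K) K) (\<lambda>x. integral (cbox (-K) K) (\<lambda>y. py f (x, y)))"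
    by (rule integral_prod_continuous[OF c])
  also have "\<dots> = integral (cbox (-K) K) (\<lambda>y. 0)"
  proof (rule integral_cong)
    fix x
    show "integral (cbox (-K) K) (\<lambda>y. py f (x, y)) = 0"
      apply (rule ftc_line[where k="\<lambda>y. f (x,y)"])
      using assms(1) apply simp
      using line_y assms(2) apply blast
      using assms(4) by (auto simp: mem_box Basis_prod_def)
  qed
  finally show ?thesis by simp
qed

lemma deriv_quad:
  fixes f :: "real \<Rightarrow> real"
  assumes "C \<ge> 0" "\<And>t. \<bar>f t - f x - D * (t - x)\<bar> \<le> C * (t - x)^2"
  shows "(f has_real_derivative D) (at x)"
  unfolding has_field_derivative_iff LIM_eq
proof (intro allI impI)
  fix r :: real assume r: "r > 0"
  show "\<exists>s>0. \<forall>y. y \<noteq> x \<and> norm (y - x) < s \<longrightarrow> norm ((f y - f x) / (y - x) - D) < r"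
  proof (intro exI[of _ "r/(C+1)"] conjI allI impI)
    show "r/(C+1) > 0" using r assms(1) by simp
    fix y assume y: "y \<noteq> x \<and> norm (y - x) < r / (C + 1)"
    have ne: "y - x \<noteq> 0" using y by simp
    have "(f y - f x) / (y - x) - D = (f y - f x - D * (y - x)) / (y - x)"
      using ne by (simp add: field_simps)
    then have "norm ((f y - f x) / (y - x) - D) = \<bar>f y - f x - D * (y - x)\<bar> / \<bar>y - x\<bar>"
      by (simp add: abs_divide)
    also have "\<dots> \<le> C * (y - x)^2 / \<bar>y - x\<bar>"
      using assms(2)[of y] by (simp add: divide_right_mono)
    also have "\<dots> = C * \<bar>y - x\<bar>"
    proof -
      define a where "a = \<bar>y - x\<bar>"
      have a: "a > 0" "(y - x)^2 = a * a" using ne by (auto simp: a_def power2_eq_square)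
      then show ?thesis unfolding a_def[symmetric] by simp
    qed
    also have "\<dots> \<le> C * (r / (C+1))" using y assms(1) by (intro mult_left_mono) auto
    also have "\<dots> < r" using r assms(1) by (simp add: field_simps)
    finally show "norm ((f y - f x) / (y - x) - D) < r" .
  qed
qed

definition hh :: "real \<Rightarrow> real" where
  "hh s = (if s \<le> 0 then 0 else if s \<ge> 1 then 1 else 3* s^2 - 2* s^3)"
definition hdr :: "real \<Rightarrow> real" where
  "hdr s = max 0 (6* s*(1-s))"

lemma hdr_cont: "continuous_on UNIV hdr"
  unfolding hdr_def by (intro continuous_intros)

lemma hdr_bounds: "0 \<le> hdr s" "hdr s \<le> 3/2"
proof -
  show "0 \<le> hdr s" unfolding hdr_def by simp
  have "6* s*(1-s) \<le> 3/2"
  proof -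
    have "0 \<le> 6*(s - 1/2)^2" by simp
    then show ?thesis by (simp add: power2_eq_square algebra_simps)
  qed
  then show "hdr s \<le> 3/2" unfolding hdr_def by simp
qed

lemma hh_bounds: "0 \<le> hh s" "hh s \<le> 1"
proof -
  have a: "0 \<le> 3* s^2 - 2* s^3" if "0 < s" "s < 1"
  proof -
    have "3* s^2 - 2* s^3 = s^2 * (3 - 2* s)" by (simp add: power2_eq_square power3_eq_cube algebra_simps)
    then show ?thesis using that by simp
  qed
  have b: "3* s^2 - 2* s^3 \<le> 1" if "0 < s" "s < 1"
  proof -
    have "1 - (3* s^2 - 2* s^3) = (1 - s)^2 * (1 + 2* s)" by (simp add: power2_eq_square power3_eq_cube algebra_simps)
    moreover have "(1 - s)^2 * (1 + 2* s) \<ge> 0" using that by (intro mult_nonneg_nonneg) auto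
    ultimately show ?thesis by linarith
  qed
  show "0 \<le> hh s" "hh s \<le> 1" unfolding hh_def using a b by auto
qed

lemma hh_zero: "s \<le> 0 \<Longrightarrow> hh s = 0"
  by (auto simp: hh_def)
lemma hh_one: assumes "s \<ge> 1" shows "hh s = 1"
  using assms by (simp add: hh_def)
lemma hdr_zero: "s \<le> 0 \<Longrightarrow> hdr s = 0"
proof -
  assume a: "s \<le> 0"
  have e: "6 * s * (1 - s) = -(6 * ((-s) * (1 - s)))" by (simp add: algebra_simps)
  have "0 \<le> (-s) * (1 - s)" using a by (intro mult_nonneg_nonneg) auto
  then have "6 * s * (1 - s) \<le> 0" unfolding e by simp
  then show ?thesis by (simp add: hdr_def)
qed
lemma hdr_zero1: "s \<ge> 1 \<Longrightarrow> hdr s = 0"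
proof -
  assume a: "s \<ge> 1"
  have e: "6 * s * (1 - s) = -(6 * (s * (s - 1)))" by (simp add: algebra_simps)
  have "0 \<le> s * (s - 1)" using a by (intro mult_nonneg_nonneg) auto
  then have "6 * s * (1 - s) \<le> 0" unfolding e by simp
  then show ?thesis by (simp add: hdr_def)
qed

lemma hh_deriv: "(hh has_real_derivative hdr s) (at s)"
proof -
  consider "s < 0" | "s = 0" | "0 < s \<and> s < 1" | "s = 1" | "s > 1" by linarith
  then show ?thesis
  proof cases
    case 1
    have "((\<lambda>_. 0::real) has_real_derivative 0) (at s)" by (rule DERIV_const)
    moreover have "hdr s = 0" using 1 by (simp add: hdr_def mult_nonpos_nonneg)
    ultimately have "((\<lambda>_. 0::real) has_real_derivative hdr s) (at s)" by simp
    then show ?thesis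
      by (rule has_field_derivative_transform_within_open[where S="{..<0}"])
        (use 1 in \<open>auto simp: hh_def\<close>)
  next
    case 5
    have "((\<lambda>_. 1::real) has_real_derivative 0) (at s)" by (rule DERIV_const)
    then have "((\<lambda>_. 1::real) has_real_derivative hdr s) (at s)"
      using 5 hdr_zero1[of s] by simp
    then show ?thesis
      by (rule has_field_derivative_transform_within_open[where S="{1<..}"]) (use 5 in \<open>auto simp: hh_def\<close>)
  next
    case 3
    have "((\<lambda>s. 3* s^2 - 2* s^3) has_real_derivative (3*(2* s) - 2*(3* s^2))) (at s)"
      by (intro derivative_eq_intros) auto
    moreover have "3*(2* s) - 2*(3* s^2) = hdr s" using 3 by (simp add: hdr_def power2_eq_square algebra_simps)
    ultimately have "((\<lambda>s. 3* s^2 - 2* s^3) has_real_derivative hdr s) (at s)" by simp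
    then show ?thesis
      by (rule has_field_derivative_transform_within_open[where S="{0<..<1}"]) (use 3 in \<open>auto simp: hh_def\<close>)
  next
    case 2
    have "\<bar>hh t - hh 0 - 0 * (t - 0)\<bar> \<le> 3 * (t - 0)^2" for t
    proof -
      consider "t \<le> 0" | "0 < t \<and> t < 1" | "t \<ge> 1" by linarith
      then show ?thesis
      proof cases
        case 1 then show ?thesis by (simp add: hh_def)
      next
        case 2
        then have "t^3 \<ge> 0" by simp
        moreover have "hh t = 3*t^2 - 2*t^3" using 2 by (simp add: hh_def)
        ultimately show ?thesis using hh_bounds[of t] by (simp add: hh_def)
      next
        case 3
        then have "1 \<le> t^2" by (simp add: one_le_power)
        moreover have "hh t = 1" using 3 by (simp add: hh_def)
        ultimately show ?thesis by (simp add: hh_def)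
      qed
    qed
    then have "(hh has_real_derivative 0) (at 0)" by (intro deriv_quad[of 3]) auto
    then show ?thesis using 2 by (simp add: hdr_def)
  next
    case 4
    have "\<bar>hh t - hh 1 - 0 * (t - 1)\<bar> \<le> 3 * (t - 1)^2" for t
    proof -
      have e: "1 - (3*t^2 - 2*t^3) = (1 - t)^2 * (1 + 2*t)" by (simp add: power2_eq_square power3_eq_cube algebra_simps)
      have "(1 - t)^2 * (1 + 2*t) \<le> (1-t)^2 * 3" if "t < 1" using that by (intro mult_left_mono) auto
      moreover have "(1 - t)^2 * (1 + 2*t) \<ge> 0" if "t > 0" using that by simp
      moreover have c3: "1 \<le> (t-1)^2" if "t \<le> 0"
      proof -
        have "1 \<le> 1 - t" using that by simp
        then have "1*1 \<le> (1-t)*(1-t)" by (intro mult_mono) auto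
        then show ?thesis by (simp add: power2_eq_square algebra_simps)
      qed
      note facts = calculation
      have sq: "(1 - t)^2 = (t - 1)^2" by (simp add: power2_commute)
      consider "t \<le> 0" | "0 < t \<and> t < 1" | "t \<ge> 1" by linarith
      then show ?thesis
      proof cases
        case 1
        have "1 \<le> (t-1)^2" using c3 1 by blast
        moreover have "hh t = 0" "hh 1 = 1" using 1 by (auto simp: hh_def)
        ultimately show ?thesis by simp
      next
        case 2
        then have "hh t = 3*t^2 - 2*t^3" by (simp add: hh_def)
        moreover have "hh 1 = 1" by (simp add: hh_def)
        moreover have "0 \<le> (1 - t)^2 * (1 + 2*t)" using 2 by simp
        ultimately have "\<bar>hh t - hh 1 - 0 * (t - 1)\<bar> = (1 - t)^2 * (1 + 2*t)"
          using e by (simp add: abs_if)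
        then show ?thesis using facts 2 sq by simp
      next
        case 3 then show ?thesis by (simp add: hh_def)
      qed
    qed
    then have "(hh has_real_derivative 0) (at 1)" by (intro deriv_quad[of 3]) auto
    then show ?thesis using 4 by (simp add: hdr_def)
  qed
qed

lemma hh_pos: "s > 0 \<Longrightarrow> hh s > 0"
  unfolding hh_def by (auto simp: power2_eq_square power3_eq_cube)

lemma hdr_pos: "0 < s \<Longrightarrow> s < 1 \<Longrightarrow> hdr s > 0"
  unfolding hdr_def by simp

lemma hh_cont: "continuous_on UNIV hh"
  using hh_deriv by (meson DERIV_continuous continuous_at_imp_continuous_on)

definition bt :: "real \<Rightarrow> real" where "bt t = hh (2 - t) * hh (2 + t)"
definition btd :: "real \<Rightarrow> real" where "btd t = - hdr (2 - t) * hh (2 + t) + hh (2 - t) * hdr (2 + t)"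

lemma bt_deriv: "(bt has_real_derivative btd t) (at t)"
proof -
  have d1: "((\<lambda>t. hh (2 - t)) has_real_derivative hdr (2 - t) * (-1)) (at t)"
    by (rule DERIV_chain2[OF hh_deriv]) (intro derivative_eq_intros, auto)
  have d2: "((\<lambda>t. hh (2 + t)) has_real_derivative hdr (2 + t) * 1) (at t)"
    by (rule DERIV_chain2[OF hh_deriv]) (intro derivative_eq_intros, auto)
  from DERIV_mult[OF d1 d2] show ?thesis unfolding bt_def[abs_def] btd_def by (simp add: algebra_simps)
qed

lemma bt_bounds: "0 \<le> bt t" "bt t \<le> 1"
  unfolding bt_def using hh_bounds[of "2-t"] hh_bounds[of "2+t"]
  by (auto intro: mult_le_one)

lemma aux_prod_le: fixes x y :: real assumes "0 \<le> x" "x \<le> c" "0 \<le> y" "y \<le> 1" shows "\<bar>x * y\<bar> \<le> c" "\<bar>y * x\<bar> \<le> c"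
proof -
  have "x * y \<le> x" using assms by (simp add: mult_left_le)
  then show "\<bar>x * y\<bar> \<le> c" "\<bar>y * x\<bar> \<le> c" using assms by (auto simp: mult.commute)
qed

lemma btd_bound: "\<bar>btd t\<bar> \<le> 3"
proof -
  have "\<bar>btd t\<bar> \<le> \<bar>hdr (2 - t) * hh (2 + t)\<bar> + \<bar>hh (2 - t) * hdr (2 + t)\<bar>"
    unfolding btd_def by (metis abs_minus_cancel abs_triangle_ineq minus_mult_left)
  also have "\<dots> \<le> 3/2 + 3/2"
    using hh_bounds[of "2-t"] hh_bounds[of "2+t"] hdr_bounds[of "2-t"] hdr_bounds[of "2+t"]
    by (intro add_mono aux_prod_le) auto
  finally show ?thesis by simp
qed

lemma bt_far: assumes "\<bar>t\<bar> \<ge> 2" shows "bt t = 0" "btd t = 0"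
proof -
  have "2 - t \<le> 0 \<or> 2 + t \<le> 0" using assms by linarith
  then show "bt t = 0" "btd t = 0" unfolding bt_def btd_def
    by (auto simp: hh_zero hdr_zero)
qed

lemma bt_near: assumes "\<bar>t\<bar> < 1" shows "bt t = 1"
  using assms unfolding bt_def by (auto simp: hh_one)

lemma bt_cont: "continuous_on UNIV bt"
  using bt_deriv by (meson DERIV_continuous continuous_at_imp_continuous_on)

lemma btd_cont: "continuous_on UNIV btd"
proof -
  have "continuous_on UNIV (\<lambda>t. - hdr (2 - t) * hh (2 + t) + hh (2 - t) * hdr (2 + t))"
    by (intro continuous_intros continuous_on_compose2[OF hdr_cont] continuous_on_compose2[OF hh_cont]) auto
  then show ?thesis unfolding btd_def[abs_def] .
qed

definition theta :: "real \<Rightarrow> real \<Rightarrow> real \<Rightarrow> real*real \<Rightarrow> real" where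
  "theta a b r q = bt ((fst q - a) / r) * bt ((snd q - b) / r)"

lemma theta_hd:
  assumes "r \<noteq> 0" shows "(theta a b r has_derivative
     (\<lambda>e. btd ((fst q - a) / r) * (fst e / r) * bt ((snd q - b) / r)
        + bt ((fst q - a) / r) * (btd ((snd q - b) / r) * (snd e / r)))) (at q)"
proof -
  have l1: "((\<lambda>q::real*real. (fst q - a) / r) has_derivative (\<lambda>e. fst e / r)) (at q)"
    by (intro derivative_eq_intros) (use assms in \<open>auto simp: diff_divide_distrib\<close>)
  have l2: "((\<lambda>q::real*real. (snd q - b) / r) has_derivative (\<lambda>e. snd e / r)) (at q)"
    by (intro derivative_eq_intros) (use assms in \<open>auto simp: diff_divide_distrib\<close>)
  have "((\<lambda>q. bt ((fst q - a) / r) * bt ((snd q - b) / r)) has_derivative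
     (\<lambda>e. bt ((fst q - a) / r) * (snd e / r * btd ((snd q - b) / r))
        + fst e / r * btd ((fst q - a) / r) * bt ((snd q - b) / r))) (at q)"
    by (rule has_derivative_mult[OF DERIV_compose_FDERIV[OF bt_deriv l1] DERIV_compose_FDERIV[OF bt_deriv l2]])
  then show ?thesis unfolding theta_def[abs_def]
    by (rule has_derivative_eq_rhs) (auto simp: fun_eq_iff algebra_simps)
qed

lemma theta_bounds: "0 \<le> theta a b r q" "theta a b r q \<le> 1"
  unfolding theta_def using bt_bounds by (auto intro: mult_le_one)

definition sq :: "real \<Rightarrow> real \<Rightarrow> real \<Rightarrow> (real*real) set" where
  "sq a b r = cbox (a - 2*r, b - 2*r) (a + 2*r, b + 2*r)"

lemma mem_sq: "q \<in> sq a b r \<longleftrightarrow> a - 2*r \<le> fst q \<and> fst q \<le> a + 2*r \<and> b - 2*r \<le> snd q \<and> snd q \<le> b + 2*r"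
  by (cases q) (auto simp: sq_def mem_box Basis_prod_def)

lemma theta_out:
  assumes "r > 0" "q \<notin> sq a b r"
  shows "theta a b r q = 0"
    and "btd ((fst q - a) / r) * bt ((snd q - b) / r) = 0"
    and "bt ((fst q - a) / r) * btd ((snd q - b) / r) = 0"
proof -
  have "\<bar>(fst q - a) / r\<bar> \<ge> 2 \<or> \<bar>(snd q - b) / r\<bar> \<ge> 2"
    using assms by (auto simp: mem_sq abs_if field_simps)
  then show "theta a b r q = 0"
    and "btd ((fst q - a) / r) * bt ((snd q - b) / r) = 0"
    and "bt ((fst q - a) / r) * btd ((snd q - b) / r) = 0"
    unfolding theta_def by (auto simp: bt_far)
qed

lemma theta_in:
  assumes "r > 0" "q \<in> box (a - r, b - r) (a + r, b + r)"
  shows "theta a b r q = 1"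
proof -
  have "\<bar>(fst q - a) / r\<bar> < 1" "\<bar>(snd q - b) / r\<bar> < 1"
    using assms by (cases q, auto simp: mem_box Basis_prod_def abs_if field_simps)+
  then show ?thesis unfolding theta_def by (simp add: bt_near)
qed

lemma int_cmul_real: "integral S (\<lambda>x. (c::real) * f x) = c * integral S f"
  using integral_cmul[of S c f] by simp

lemma intble_cmul_real: "f integrable_on S \<Longrightarrow> (\<lambda>x. (c::real) * f x) integrable_on S"
  using integrable_cmul[of f S c] by simp

lemma indicator_sq_int:
  assumes "r > 0"
  shows "(indicator (sq a b r) :: real*real \<Rightarrow> real) integrable_on cbox A C"
    and "integral (cbox A C) (indicator (sq a b r) :: real*real \<Rightarrow> real) \<le> 16 * r^2"
proof -
  obtain u v where uv: "sq a b r \<inter> cbox A C = cbox u v"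
    unfolding sq_def Int_interval by auto
  have eq: "(indicator (sq a b r) :: real*real \<Rightarrow> real) = (\<lambda>x. if x \<in> sq a b r then 1 else 0)"
    by (auto simp: indicator_def)
  show "(indicator (sq a b r) :: real*real \<Rightarrow> real) integrable_on cbox A C"
    unfolding eq integrable_restrict_Int uv by (rule integrable_const)
  have "integral (cbox A C) (indicator (sq a b r) :: real*real \<Rightarrow> real) = measure lborel (cbox u v)"
    unfolding eq integral_restrict_Int uv by simp
  also have "\<dots> \<le> measure lborel (sq a b r)"
    unfolding sq_def by (rule content_subset) (use uv in \<open>auto simp: sq_def\<close>)
  also have "\<dots> = 16 * r^2"
    using assms by (simp add: sq_def content_Pair power2_eq_square)
  finally show "integral (cbox A C) (indicator (sq a b r) :: real*real \<Rightarrow> real) \<le> 16 * r^2" .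
qed

definition Th :: "nat set \<Rightarrow> (nat \<Rightarrow> real) \<Rightarrow> (nat \<Rightarrow> real) \<Rightarrow> (nat \<Rightarrow> real) \<Rightarrow> real*real \<Rightarrow> real" where
  "Th F a b r q = (\<Sum>n\<in>F. theta (a n) (b n) (r n) q)"

definition psi :: "nat set \<Rightarrow> (nat \<Rightarrow> real) \<Rightarrow> (nat \<Rightarrow> real) \<Rightarrow> (nat \<Rightarrow> real) \<Rightarrow> real*real \<Rightarrow> real" where
  "psi F a b r q = 1 - hh (Th F a b r q)"

definition Dx :: "real \<Rightarrow> real \<Rightarrow> real \<Rightarrow> real*real \<Rightarrow> real" where
  "Dx a b r q = btd ((fst q - a) / r) * bt ((snd q - b) / r) / r"
definition Dy :: "real \<Rightarrow> real \<Rightarrow> real \<Rightarrow> real*real \<Rightarrow> real" where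
  "Dy a b r q = bt ((fst q - a) / r) * btd ((snd q - b) / r) / r"

context
  fixes F :: "nat set" and a b r :: "nat \<Rightarrow> real"
  assumes fin: "finite F" and rpos: "\<And>n. n \<in> F \<Longrightarrow> r n > 0"
begin

lemma psi_hd:
  "(psi F a b r has_derivative (\<lambda>e. - (hdr (Th F a b r q) *
       (\<Sum>n\<in>F. Dx (a n) (b n) (r n) q * fst e + Dy (a n) (b n) (r n) q * snd e)))) (at q)"
proof -
  have "((\<lambda>q. \<Sum>n\<in>F. theta (a n) (b n) (r n) q) has_derivative
     (\<lambda>e. \<Sum>n\<in>F. btd ((fst q - a n) / r n) * (fst e / r n) * bt ((snd q - b n) / r n)
        + bt ((fst q - a n) / r n) * (btd ((snd q - b n) / r n) * (snd e / r n)))) (at q)"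
    by (intro has_derivative_sum theta_hd) (metis rpos less_irrefl)
  from has_derivative_diff[OF has_derivative_const[of 1] DERIV_compose_FDERIV[OF hh_deriv this]]
  show ?thesis unfolding psi_def[abs_def] Th_def[abs_def]
    by (rule has_derivative_eq_rhs) (auto simp: fun_eq_iff Dx_def Dy_def algebra_simps)
qed

lemma psi_diff: "psi F a b r differentiable (at q)"
  unfolding differentiable_def using psi_hd by blast

lemma px_psi: "px (psi F a b r) q = - (hdr (Th F a b r q) * (\<Sum>n\<in>F. Dx (a n) (b n) (r n) q))"
  unfolding px_def fd_eq[OF psi_hd] by simp
lemma py_psi: "py (psi F a b r) q = - (hdr (Th F a b r q) * (\<Sum>n\<in>F. Dy (a n) (b n) (r n) q))"
  unfolding py_def fd_eq[OF psi_hd] by simp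

lemma theta_cont: "r0 \<noteq> 0 \<Longrightarrow> continuous_on UNIV (theta a0 b0 r0)"
  unfolding theta_def[abs_def]
  by (intro continuous_intros continuous_on_compose2[OF bt_cont]) auto

lemma Th_cont: "continuous_on UNIV (Th F a b r)"
  unfolding Th_def[abs_def] by (intro continuous_intros theta_cont) (metis rpos less_irrefl)

lemma Dx_cont: "r0 \<noteq> 0 \<Longrightarrow> continuous_on UNIV (Dx a0 b0 r0)"
  unfolding Dx_def[abs_def]
  by (intro continuous_intros continuous_on_compose2[OF bt_cont] continuous_on_compose2[OF btd_cont]) auto
lemma Dy_cont: "r0 \<noteq> 0 \<Longrightarrow> continuous_on UNIV (Dy a0 b0 r0)"
  unfolding Dy_def[abs_def]
  by (intro continuous_intros continuous_on_compose2[OF bt_cont] continuous_on_compose2[OF btd_cont]) auto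

lemma px_psi_cont: "continuous_on UNIV (px (psi F a b r))"
  unfolding px_psi[abs_def]
  by (intro continuous_intros continuous_on_compose2[OF hdr_cont Th_cont] Dx_cont) (auto, metis rpos less_irrefl)
lemma py_psi_cont: "continuous_on UNIV (py (psi F a b r))"
  unfolding py_psi[abs_def]
  by (intro continuous_intros continuous_on_compose2[OF hdr_cont Th_cont] Dy_cont) (auto, metis rpos less_irrefl)

lemma psi_bounds: "0 \<le> psi F a b r q" "psi F a b r q \<le> 1"
  unfolding psi_def using hh_bounds by auto

lemma Dx_bound: assumes "r0 > 0" shows "\<bar>Dx a0 b0 r0 q\<bar> \<le> (3 / r0) * indicator (sq a0 b0 r0) q"
proof (cases "q \<in> sq a0 b0 r0")
  case True
  have "\<bar>btd ((fst q - a0) / r0)\<bar> * \<bar>bt ((snd q - b0) / r0)\<bar> \<le> 3 * 1"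
    using btd_bound bt_bounds by (intro mult_mono) auto
  then have "\<bar>btd ((fst q - a0) / r0) * bt ((snd q - b0) / r0)\<bar> \<le> 3" by (simp add: abs_mult)
  then show ?thesis using True assms by (simp add: Dx_def abs_divide divide_right_mono)
next
  case False
  then show ?thesis using theta_out[OF assms False] by (simp add: Dx_def)
qed

lemma Dy_bound: assumes "r0 > 0" shows "\<bar>Dy a0 b0 r0 q\<bar> \<le> (3 / r0) * indicator (sq a0 b0 r0) q"
proof (cases "q \<in> sq a0 b0 r0")
  case True
  have "\<bar>btd ((snd q - b0) / r0)\<bar> * \<bar>bt ((fst q - a0) / r0)\<bar> \<le> 3 * 1"
    using btd_bound bt_bounds by (intro mult_mono) auto
  then have "\<bar>bt ((fst q - a0) / r0) * btd ((snd q - b0) / r0)\<bar> \<le> 3" by (simp add: abs_mult mult.commute)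
  then show ?thesis using True assms by (simp add: Dy_def abs_divide divide_right_mono)
next
  case False
  then show ?thesis using theta_out[OF assms False] by (simp add: Dy_def)
qed

definition "bb q = (\<Sum>n\<in>F. (9 / r n) * indicator (sq (a n) (b n) (r n)) q)"
definition "ee q = (\<Sum>n\<in>F. indicator (sq (a n) (b n) (r n)) q :: real)"

lemma grad_bound: "\<bar>px (psi F a b r) q\<bar> + \<bar>py (psi F a b r) q\<bar> \<le> bb q"
proof -
  have h: "0 \<le> hdr (Th F a b r q)" "hdr (Th F a b r q) \<le> 3/2" using hdr_bounds by auto
  have sx: "\<bar>\<Sum>n\<in>F. Dx (a n) (b n) (r n) q\<bar> \<le> (\<Sum>n\<in>F. (3 / r n) * indicator (sq (a n) (b n) (r n)) q)"
    by (rule order.trans[OF sum_abs]) (intro sum_mono Dx_bound rpos)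
  have sy: "\<bar>\<Sum>n\<in>F. Dy (a n) (b n) (r n) q\<bar> \<le> (\<Sum>n\<in>F. (3 / r n) * indicator (sq (a n) (b n) (r n)) q)"
    by (rule order.trans[OF sum_abs]) (intro sum_mono Dy_bound rpos)
  have "\<bar>px (psi F a b r) q\<bar> \<le> 3/2 * (\<Sum>n\<in>F. (3 / r n) * indicator (sq (a n) (b n) (r n)) q)"
    unfolding px_psi abs_minus_cancel abs_mult using h sx by (intro mult_mono) auto
  moreover have "\<bar>py (psi F a b r) q\<bar> \<le> 3/2 * (\<Sum>n\<in>F. (3 / r n) * indicator (sq (a n) (b n) (r n)) q)"
    unfolding py_psi abs_minus_cancel abs_mult using h sy by (intro mult_mono) auto
  moreover have "bb q = 3 * (\<Sum>n\<in>F. (3 / r n) * indicator (sq (a n) (b n) (r n)) q)"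
    unfolding bb_def sum_distrib_left by (intro sum.cong refl) simp
  ultimately show ?thesis by linarith
qed

lemma bb_nonneg: "0 \<le> bb q"
  unfolding bb_def by (intro sum_nonneg mult_nonneg_nonneg divide_nonneg_pos) (auto simp: rpos)
lemma ee_nonneg: "0 \<le> ee q"
  unfolding ee_def by (intro sum_nonneg) auto

lemma ee_ge: assumes "psi F a b r q \<noteq> 1" shows "1 \<le> ee q"
proof -
  have "hh (Th F a b r q) \<noteq> 0" using assms by (simp add: psi_def)
  then have "Th F a b r q > 0"
  proof -
    assume h: "hh (Th F a b r q) \<noteq> 0"
    show ?thesis
    proof (rule ccontr)
      assume "\<not> Th F a b r q > 0"
      then have "Th F a b r q \<le> 0" by simp
      then show False using h hh_zero by blast
    qed
  qed
  then have "\<exists>n\<in>F. theta (a n) (b n) (r n) q \<noteq> 0"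
  proof -
    assume pos: "Th F a b r q > 0"
    show ?thesis
    proof (rule ccontr)
      assume "\<not> (\<exists>n\<in>F. theta (a n) (b n) (r n) q \<noteq> 0)"
      then have "Th F a b r q = 0" unfolding Th_def by simp
      then show False using pos by simp
    qed
  qed
  then obtain n where n: "n \<in> F" "theta (a n) (b n) (r n) q \<noteq> 0" by blast
  then have "q \<in> sq (a n) (b n) (r n)" using theta_out rpos by blast
  then have "1 \<le> (indicator (sq (a n) (b n) (r n)) q :: real)" by simp
  also have "\<dots> \<le> ee q" unfolding ee_def using n fin
    by (intro member_le_sum) auto
  finally show ?thesis .
qed

lemma psi_zero: assumes "n \<in> F" "q \<in> box (a n - r n, b n - r n) (a n + r n, b n + r n)"
  shows "psi F a b r q = 0"
proof -
  have "1 = theta (a n) (b n) (r n) q" using theta_in rpos assms by simp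
  also have "\<dots> \<le> Th F a b r q" unfolding Th_def using assms fin theta_bounds
    by (intro member_le_sum) auto
  finally show ?thesis by (simp add: psi_def hh_one)
qed

lemma ee_int: "ee integrable_on cbox A C" "integral (cbox A C) ee \<le> (\<Sum>n\<in>F. 16 * (r n)^2)"
proof -
  show "ee integrable_on cbox A C" unfolding ee_def[abs_def]
    using rpos by (intro integrable_sum fin indicator_sq_int) auto
  have "integral (cbox A C) ee = (\<Sum>n\<in>F. integral (cbox A C) (indicator (sq (a n) (b n) (r n))))"
    unfolding ee_def[abs_def] using rpos by (intro integral_sum fin indicator_sq_int) auto
  also have "\<dots> \<le> (\<Sum>n\<in>F. 16 * (r n)^2)"
    using rpos by (intro sum_mono indicator_sq_int) auto
  finally show "integral (cbox A C) ee \<le> (\<Sum>n\<in>F. 16 * (r n)^2)" .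
qed

lemma bb_int: "bb integrable_on cbox A C" "integral (cbox A C) bb \<le> (\<Sum>n\<in>F. 144 * r n)"
proof -
  have i: "(\<lambda>q. (9 / r n) * indicator (sq (a n) (b n) (r n)) q) integrable_on cbox A C" if "n \<in> F" for n
    using rpos that by (intro intble_cmul_real indicator_sq_int) auto
  show "bb integrable_on cbox A C" unfolding bb_def[abs_def]
    using i by (intro integrable_sum fin) auto
  have "integral (cbox A C) bb = (\<Sum>n\<in>F. integral (cbox A C) (\<lambda>q. (9 / r n) * indicator (sq (a n) (b n) (r n)) q))"
    unfolding bb_def[abs_def] using i by (intro integral_sum fin) auto
  also have "\<dots> = (\<Sum>n\<in>F. (9 / r n) * integral (cbox A C) (indicator (sq (a n) (b n) (r n))))"
    by (intro sum.cong refl int_cmul_real)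
  also have "\<dots> \<le> (\<Sum>n\<in>F. (9 / r n) * (16 * (r n)^2))"
    by (intro sum_mono mult_left_mono indicator_sq_int) (auto simp: rpos less_imp_le)
  also have "\<dots> = (\<Sum>n\<in>F. 144 * r n)"
    using rpos by (intro sum.cong refl) (auto simp: power2_eq_square)
  finally show "integral (cbox A C) bb \<le> (\<Sum>n\<in>F. 144 * r n)" .
qed

end

lemma hcover:
  assumes H: "hausdorff1 K = 0" and cK: "compact K" and s: "s > 0"
  obtains F and r a b :: "nat \<Rightarrow> real" where "finite F" "\<And>n. n \<in> F \<Longrightarrow> r n > 0" "(\<Sum>n\<in>F. r n) \<le> s"
    "K \<subseteq> (\<Union>n\<in>F. box (a n - r n, b n - r n) (a n + r n, b n + r n))"
proof -
  have "hausdorff1_delta 1 K \<le> hausdorff1 K" unfolding hausdorff1_def by (rule SUP_upper) simp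
  then have "hausdorff1_delta 1 K < ennreal (s/4)" using H s by simp
  then obtain C where C: "K \<subseteq> (\<Union>n. C n)" "\<And>n. bounded (C n)" "\<And>n. diameter (C n) \<le> 1"
    and sumC: "(\<Sum>n. ennreal (diameter (C n))) < ennreal (s/4)"
    unfolding hausdorff1_delta_def INF_less_iff by auto
  define d where "d n = diameter (C n)" for n
  have d0: "0 \<le> d n" for n unfolding d_def using C(2) by (rule diameter_ge_0)
  have partial: "(\<Sum>n<N. d n) < s/4" for N
  proof -
    have "ennreal (\<Sum>n<N. d n) = (\<Sum>n<N. ennreal (d n))" using d0 by simp
    also have "\<dots> \<le> (\<Sum>n. ennreal (d n))" by (intro sum_le_suminf summableI) auto
    also have "\<dots> < ennreal (s/4)" using sumC unfolding d_def .
    finally show ?thesis using d0 by (simp add: ennreal_less_iff sum_nonneg)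
  qed
  define r where "r n = d n + s/4 * (1/2)^n" for n
  define c where "c n = (SOME x. x \<in> C n)" for n
  define a where "a n = fst (c n)" for n
  define b where "b n = snd (c n)" for n
  define I where "I = {n. C n \<noteq> {}}"
  define B where "B n = box (a n - r n, b n - r n) (a n + r n, b n + r n)" for n
  have rpos: "r n > 0" for n unfolding r_def using d0[of n] s by (intro add_nonneg_pos) auto
  have KB: "K \<subseteq> (\<Union>n\<in>I. B n)"
  proof
    fix x assume "x \<in> K"
    then obtain n where xn: "x \<in> C n" using C(1) by auto
    then have cn: "c n \<in> C n" unfolding c_def by (metis someI_ex)
    have "dist x (c n) \<le> d n" unfolding d_def by (rule diameter_bounded_bound[OF C(2) xn cn])
    also have "\<dots> < r n" unfolding r_def using s by simp
    finally have dx: "dist x (c n) < r n" .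
    have "dist (fst x) (fst (c n)) < r n" "dist (snd x) (snd (c n)) < r n"
      using dist_fst_le[of x "c n"] dist_snd_le[of x "c n"] dx by linarith+
    then have "x \<in> B n" unfolding B_def a_def b_def
      by (cases x) (auto simp: mem_box Basis_prod_def dist_real_def abs_less_iff)
    moreover have "n \<in> I" using xn unfolding I_def by auto
    ultimately show "x \<in> (\<Union>n\<in>I. B n)" by auto
  qed
  obtain F where F: "F \<subseteq> I" "finite F" "K \<subseteq> (\<Union>n\<in>F. B n)"
    by (rule compactE_image[OF cK _ KB]) (auto simp: B_def)
  obtain N where N: "F \<subseteq> {..<N}" using F(2) finite_nat_iff_bounded by blast
  have "(\<Sum>n\<in>F. r n) \<le> (\<Sum>n<N. r n)"
    using N rpos by (intro sum_mono2) (auto simp: less_imp_le)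
  also have "\<dots> = (\<Sum>n<N. d n) + s/4 * (\<Sum>n<N. (1/2::real)^n)"
    unfolding r_def by (simp add: sum.distrib sum_distrib_left)
  also have "(\<Sum>n<N. (1/2::real)^n) \<le> 2"
    unfolding sum_gp_strict by simp
  then have "s/4 * (\<Sum>n<N. (1/2::real)^n) \<le> s/4 * 2" using s by (intro mult_left_mono) auto
  then have "(\<Sum>n<N. d n) + s/4 * (\<Sum>n<N. (1/2::real)^n) \<le> s"
    using partial[of N] s by linarith
  finally have "(\<Sum>n\<in>F. r n) \<le> s" .
  then show ?thesis using that[of F r a b] F rpos unfolding B_def by auto
qed

lemma nf_hd:
  fixes A B :: "real*real \<Rightarrow> real"
  assumes dA: "(A has_derivative DA) (at q)" and dB: "(B has_derivative DB) (at q)"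
    and pos: "A q^2 + B q^2 > 0"
  shows "((\<lambda>q. A q / sqrt (A q^2 + B q^2)) has_derivative
     (\<lambda>e. DA e / sqrt (A q^2 + B q^2) - A q * (A q * DA e + B q * DB e) / (sqrt (A q^2 + B q^2))^3)) (at q)"
proof -
  let ?S = "A q^2 + B q^2"
  have "((\<lambda>x. A x * A x + B x * B x) has_derivative (\<lambda>e. 2 * A q * DA e + 2 * B q * DB e)) (at q)"
    using has_derivative_add[OF has_derivative_mult[OF dA dA] has_derivative_mult[OF dB dB]]
    by (rule has_derivative_eq_rhs) (auto simp: fun_eq_iff algebra_simps)
  then have dS: "((\<lambda>q. A q^2 + B q^2) has_derivative (\<lambda>e. 2 * A q * DA e + 2 * B q * DB e)) (at q)"
    by (simp add: power2_eq_square)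
  have dR: "((\<lambda>q. sqrt (A q^2 + B q^2)) has_derivative (\<lambda>e. (2 * A q * DA e + 2 * B q * DB e) * (inverse (sqrt ?S) / 2))) (at q)"
    by (rule DERIV_compose_FDERIV[OF DERIV_real_sqrt[OF pos] dS])
  have R0: "sqrt ?S \<noteq> 0" using pos by (metis less_irrefl real_sqrt_eq_zero_cancel_iff)
  have "((\<lambda>q. A q / sqrt (A q^2 + B q^2)) has_derivative
     (\<lambda>e. (DA e * sqrt ?S - A q * ((2 * A q * DA e + 2 * B q * DB e) * (inverse (sqrt ?S) / 2))) / (sqrt ?S * sqrt ?S))) (at q)"
    by (rule has_derivative_divide'[OF dA dR R0])
  then show ?thesis
  proof (rule has_derivative_eq_rhs)
    have sq: "sqrt ?S * sqrt ?S = ?S" using pos by simp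
    show "(\<lambda>e. (DA e * sqrt ?S - A q * ((2 * A q * DA e + 2 * B q * DB e) * (inverse (sqrt ?S) / 2))) / (sqrt ?S * sqrt ?S)) =
      (\<lambda>e. DA e / sqrt ?S - A q * (A q * DA e + B q * DB e) / (sqrt ?S)^3)"
    proof
      fix e
      define R where "R = sqrt ?S"
      have R: "R \<noteq> 0" using R0 R_def by simp
      show "(DA e * sqrt ?S - A q * ((2 * A q * DA e + 2 * B q * DB e) * (inverse (sqrt ?S) / 2))) / (sqrt ?S * sqrt ?S) =
        DA e / sqrt ?S - A q * (A q * DA e + B q * DB e) / (sqrt ?S)^3"
        unfolding R_def[symmetric] using R by (simp add: field_simps power3_eq_cube)
    qed
  qed
qed

definition NP :: "(real*real \<Rightarrow> real) \<Rightarrow> real*real \<Rightarrow> real" where "NP w q = px w q - snd q"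
definition NQ :: "(real*real \<Rightarrow> real) \<Rightarrow> real*real \<Rightarrow> real" where "NQ w q = py w q + fst q"

lemma fst_N: "(\<lambda>q. fst (Nfield w q)) = (\<lambda>q. NP w q / sqrt (NP w q^2 + NQ w q^2))"
  by (simp add: Nfield_def Let_def NP_def NQ_def fun_eq_iff)
lemma snd_N: "(\<lambda>q. snd (Nfield w q)) = (\<lambda>q. NQ w q / sqrt (NQ w q^2 + NP w q^2))"
  by (simp add: Nfield_def Let_def NP_def NQ_def fun_eq_iff add.commute)

lemma NP_hd: "px w differentiable (at q) \<Longrightarrow>
   (NP w has_derivative (\<lambda>e. frechet_derivative (px w) (at q) e - snd e)) (at q)"
  unfolding NP_def[abs_def] by (intro has_derivative_diff fd_works has_derivative_snd has_derivative_ident)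
lemma NQ_hd: "py w differentiable (at q) \<Longrightarrow>
   (NQ w has_derivative (\<lambda>e. frechet_derivative (py w) (at q) e + fst e)) (at q)"
  unfolding NQ_def[abs_def] by (intro has_derivative_add fd_works has_derivative_fst has_derivative_ident)

definition NF :: "real \<Rightarrow> real \<Rightarrow> real \<Rightarrow> real \<Rightarrow> real" where
  "NF A B dA dB = dA / sqrt (A^2 + B^2) - A * (A * dA + B * dB) / (sqrt (A^2 + B^2))^3"

context
  fixes w :: "real*real \<Rightarrow> real" and q :: "real*real"
  assumes dx: "px w differentiable (at q)" and dy: "py w differentiable (at q)"
    and pos: "NP w q^2 + NQ w q^2 > 0"
begin

lemma N1_hd: "((\<lambda>q. fst (Nfield w q)) has_derivative (\<lambda>e. NF (NP w q) (NQ w q)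
    (frechet_derivative (px w) (at q) e - snd e) (frechet_derivative (py w) (at q) e + fst e))) (at q)"
  unfolding fst_N NF_def using nf_hd[OF NP_hd[OF dx] NQ_hd[OF dy] pos] by simp

lemma N2_hd: "((\<lambda>q. snd (Nfield w q)) has_derivative (\<lambda>e. NF (NQ w q) (NP w q)
    (frechet_derivative (py w) (at q) e + fst e) (frechet_derivative (px w) (at q) e - snd e))) (at q)"
  unfolding snd_N NF_def using nf_hd[OF NQ_hd[OF dy] NP_hd[OF dx]] pos by (simp add: add.commute)

lemma N1_diff: "(\<lambda>q. fst (Nfield w q)) differentiable (at q)"
  using N1_hd by (auto simp: differentiable_def)
lemma N2_diff: "(\<lambda>q. snd (Nfield w q)) differentiable (at q)"
  using N2_hd by (auto simp: differentiable_def)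

lemma px_N1: "px (\<lambda>q. fst (Nfield w q)) q = NF (NP w q) (NQ w q) (px (px w) q) (px (py w) q + 1)"
  unfolding px_def[of "\<lambda>q. fst (Nfield w q)"] fd_eq[OF N1_hd] by (simp add: px_def)
lemma py_N1: "py (\<lambda>q. fst (Nfield w q)) q = NF (NP w q) (NQ w q) (py (px w) q - 1) (py (py w) q)"
  unfolding py_def[of "\<lambda>q. fst (Nfield w q)"] fd_eq[OF N1_hd] by (simp add: py_def)
lemma px_N2: "px (\<lambda>q. snd (Nfield w q)) q = NF (NQ w q) (NP w q) (px (py w) q + 1) (px (px w) q)"
  unfolding px_def[of "\<lambda>q. snd (Nfield w q)"] fd_eq[OF N2_hd] by (simp add: px_def)
lemma py_N2: "py (\<lambda>q. snd (Nfield w q)) q = NF (NQ w q) (NP w q) (py (py w) q) (py (px w) q - 1)"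
  unfolding py_def[of "\<lambda>q. snd (Nfield w q)"] fd_eq[OF N2_hd] by (simp add: py_def)

end

lemma NF_cont:
  assumes "continuous_on V A" "continuous_on V B" "continuous_on V dA" "continuous_on V dB"
    "\<forall>q\<in>V. A q^2 + B q^2 > 0"
  shows "continuous_on V (\<lambda>q. NF (A q) (B q) (dA q) (dB q))"
  unfolding NF_def using assms
  by (intro continuous_intros) auto

lemma Xid:
  fixes Ra Rb n1 n2 m1 m2 :: real
  assumes "n1^2 + n2^2 = 1" "m1^2 + m2^2 = 1"
  shows "(Ra*n1 - Rb*m1)*(n1-m1) + (Ra*n2 - Rb*m2)*(n2-m2) = (Ra+Rb)/2*((n1-m1)^2+(n2-m2)^2)"
proof -
  have "(Ra*n1 - Rb*m1)*(n1-m1) + (Ra*n2 - Rb*m2)*(n2-m2)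
      = Ra*(n1^2+n2^2) + Rb*(m1^2+m2^2) - (Ra+Rb)*(n1*m1+n2*m2)"
    by (simp add: algebra_simps power2_eq_square)
  also have "\<dots> = Ra + Rb - (Ra+Rb)*(n1*m1+n2*m2)" using assms by simp
  also have "\<dots> = (Ra+Rb)/2*(1 + 1 - 2*(n1*m1+n2*m2))" by (simp add: field_simps)
  also have "\<dots> = (Ra+Rb)/2*((n1^2+n2^2) + (m1^2+m2^2) - 2*(n1*m1+n2*m2))" using assms by simp
  also have "\<dots> = (Ra+Rb)/2*((n1-m1)^2+(n2-m2)^2)"
    by (simp add: algebra_simps power2_eq_square)
  finally show ?thesis .
qed

lemma N_fst_pt: "fst (Nfield w q) = NP w q / sqrt (NP w q^2 + NQ w q^2)"
  by (simp add: Nfield_def Let_def NP_def NQ_def)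
lemma N_snd_pt: "snd (Nfield w q) = NQ w q / sqrt (NP w q^2 + NQ w q^2)"
  by (simp add: Nfield_def Let_def NP_def NQ_def)

lemma Nprops:
  assumes pos: "NP w q^2 + NQ w q^2 > 0"
  defines "R \<equiv> sqrt (NP w q^2 + NQ w q^2)"
  shows "R > 0" "NP w q = R * fst (Nfield w q)" "NQ w q = R * snd (Nfield w q)"
    "fst (Nfield w q)^2 + snd (Nfield w q)^2 = 1"
    "\<bar>fst (Nfield w q)\<bar> \<le> 1" "\<bar>snd (Nfield w q)\<bar> \<le> 1"
proof -
  show R: "R > 0" unfolding R_def using pos by simp
  show "NP w q = R * fst (Nfield w q)" "NQ w q = R * snd (Nfield w q)"
    unfolding N_fst_pt N_snd_pt R_def[symmetric] using R by auto
  have RR: "R^2 = NP w q^2 + NQ w q^2" unfolding R_def using pos by simp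
  show one: "fst (Nfield w q)^2 + snd (Nfield w q)^2 = 1"
  proof -
    have "fst (Nfield w q)^2 + snd (Nfield w q)^2 = (NP w q^2 + NQ w q^2) / R^2"
      unfolding N_fst_pt N_snd_pt R_def[symmetric] by (simp add: power_divide add_divide_distrib)
    also have "\<dots> = 1" using R by (simp add: RR[symmetric])
    finally show ?thesis .
  qed
  show "\<bar>fst (Nfield w q)\<bar> \<le> 1" "\<bar>snd (Nfield w q)\<bar> \<le> 1"
  proof -
    have "fst (Nfield w q)^2 \<le> 1" "snd (Nfield w q)^2 \<le> 1"
      using one zero_le_power2[of "fst (Nfield w q)"] zero_le_power2[of "snd (Nfield w q)"] by linarith+
    then show "\<bar>fst (Nfield w q)\<bar> \<le> 1" "\<bar>snd (Nfield w q)\<bar> \<le> 1" by (simp_all add: abs_square_le_1)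
  qed
qed

lemma diff_cont_on: "(\<And>q. q \<in> V \<Longrightarrow> f differentiable (at q)) \<Longrightarrow> continuous_on V f"
  by (meson continuous_at_imp_continuous_on differentiable_imp_continuous_within)

theorem theorem5p2:
  fixes \<Omega> S1 S2 :: "(real * real) set"
    and u v :: "real * real \<Rightarrow> real"
  assumes opn: "open \<Omega>" and "connected \<Omega>" and bnd: "bounded \<Omega>"
    and S1sub: "S1 \<subseteq> \<Omega>" and S2sub: "S2 \<subseteq> \<Omega>"
    and cu: "continuous_on (closure \<Omega> - S1) u"
    and cv: "continuous_on (closure \<Omega> - S2) v"
    and Sdef: "S = S1 \<union> S2 \<union> sing_set \<Omega> S1 u \<union> sing_set \<Omega> S2 v"
    and C2u: "C2_on (\<Omega> - S) u" and C2v: "C2_on (\<Omega> - S) v"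
    and H: "hausdorff1 (closure S) = 0"
    and divge: "\<forall>p \<in> \<Omega> - S. div2 (Nfield u) p \<ge> div2 (Nfield v) p"
    and bdry: "\<forall>p \<in> frontier \<Omega> - S. u p \<le> v p"
  shows "\<forall>p \<in> {q \<in> \<Omega>. u q - v q > 0} - S. Nfield u p = Nfield v p"
proof (rule ballI, rule ccontr)
  fix p0 assume p0m: "p0 \<in> {q \<in> \<Omega>. u q - v q > 0} - S" and ne: "Nfield u p0 \<noteq> Nfield v p0"
  have p0: "p0 \<in> \<Omega>" "p0 \<notin> S" "u p0 - v p0 > 0" using p0m by auto
  have p0S: "p0 \<in> \<Omega> - S" using p0 by simp
  have S\<Omega>: "S \<subseteq> \<Omega>" using Sdef S1sub S2sub by (auto simp: sing_set_def)
  have S1S: "S1 \<subseteq> S" "S2 \<subseteq> S" using Sdef by auto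
  have regu: "u differentiable (at q)" "px u differentiable (at q)" "py u differentiable (at q)"
    if "q \<in> \<Omega> - S" for q using C2u that unfolding C2_on_def by auto
  have regv: "v differentiable (at q)" "px v differentiable (at q)" "py v differentiable (at q)"
    if "q \<in> \<Omega> - S" for q using C2v that unfolding C2_on_def by auto
  have posu: "NP u q^2 + NQ u q^2 > 0" if "q \<in> \<Omega> - S" for q
  proof -
    have "q \<notin> sing_set \<Omega> S1 u" using that Sdef by auto
    moreover have "q \<in> \<Omega> - S1" using that S1S by auto
    ultimately have "\<not> (NP u q = 0 \<and> NQ u q = 0)" using regu(1)[OF that]
      unfolding sing_set_def NP_def NQ_def by auto
    then show ?thesis by (simp add: sum_power2_gt_zero_iff)
  qed
  have posv: "NP v q^2 + NQ v q^2 > 0" if "q \<in> \<Omega> - S" for q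
  proof -
    have "q \<notin> sing_set \<Omega> S2 v" using that Sdef by auto
    moreover have "q \<in> \<Omega> - S2" using that S1S by auto
    ultimately have "\<not> (NP v q = 0 \<and> NQ v q = 0)" using regv(1)[OF that]
      unfolding sing_set_def NP_def NQ_def by auto
    then show ?thesis by (simp add: sum_power2_gt_zero_iff)
  qed
  define V where "V = \<Omega> - closure S"
  have openV: "open V" using opn by (simp add: V_def open_Diff)
  have VS: "V \<subseteq> \<Omega> - S" using closure_subset V_def by auto
  define D where "D = u p0 - v p0"
  have D: "D > 0" using p0 D_def by simp
  define \<epsilon> where "\<epsilon> = D/2"
  define g where "g t = hh ((t - \<epsilon>)/D)" for t
  define g' where "g' t = hdr ((t - \<epsilon>)/D) / D" for t
  have gder: "(g has_real_derivative g' t) (at t)" for t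
  proof -
    have "((\<lambda>t. (t - \<epsilon>)/D) has_real_derivative 1/D) (at t)"
      by (intro derivative_eq_intros) (use D in auto)
    from DERIV_chain2[OF hh_deriv this] show ?thesis unfolding g_def[abs_def] g'_def by simp
  qed
  have g_bounds: "0 \<le> g t" "g t \<le> 1" for t using hh_bounds g_def by auto
  have g'_nonneg: "0 \<le> g' t" for t using hdr_bounds D g'_def by simp
  have g_zero: "g t = 0" if "t \<le> \<epsilon>" for t
    using that D unfolding g_def by (intro hh_zero) (simp add: divide_nonpos_pos)
  have g_cont: "continuous_on UNIV g"
    using gder by (meson DERIV_continuous continuous_at_imp_continuous_on)
  have g'_cont: "continuous_on UNIV g'"
    unfolding g'_def[abs_def] by (intro continuous_intros continuous_on_compose2[OF hdr_cont]) (use D in auto)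
  have g'p0: "g' D > 0"
  proof -
    have "(D - \<epsilon>) / D = 1/2" using D by (simp add: \<epsilon>_def field_simps)
    then show ?thesis using D hdr_pos[of "1/2"] by (simp add: g'_def)
  qed
  define W1 where "W1 q = fst (Nfield u q) - fst (Nfield v q)" for q
  define W2 where "W2 q = snd (Nfield u q) - snd (Nfield v q)" for q
  define X where "X q = (px u q - px v q) * W1 q + (py u q - py v q) * W2 q" for q
  have Xeq: "X q = (sqrt (NP u q^2 + NQ u q^2) + sqrt (NP v q^2 + NQ v q^2))/2 * (W1 q^2 + W2 q^2)"
    if "q \<in> \<Omega> - S" for q
  proof -
    note nu = Nprops[OF posu[OF that]] and nv = Nprops[OF posv[OF that]]
    have "px u q - px v q = NP u q - NP v q" "py u q - py v q = NQ u q - NQ v q"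
      by (simp_all add: NP_def NQ_def)
    then have "X q = (sqrt (NP u q^2 + NQ u q^2) * fst (Nfield u q) - sqrt (NP v q^2 + NQ v q^2) * fst (Nfield v q)) * (fst (Nfield u q) - fst (Nfield v q))
       + (sqrt (NP u q^2 + NQ u q^2) * snd (Nfield u q) - sqrt (NP v q^2 + NQ v q^2) * snd (Nfield v q)) * (snd (Nfield u q) - snd (Nfield v q))"
      unfolding X_def W1_def W2_def using nu(2,3) nv(2,3) by simp
    also have "\<dots> = (sqrt (NP u q^2 + NQ u q^2) + sqrt (NP v q^2 + NQ v q^2))/2 * (W1 q^2 + W2 q^2)"
      unfolding W1_def W2_def by (rule Xid[OF nu(4) nv(4)])
    finally show ?thesis .
  qed
  have Xnonneg: "X q \<ge> 0" if "q \<in> \<Omega> - S" for q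
    unfolding Xeq[OF that] by (intro mult_nonneg_nonneg) auto
  have Xpos: "X p0 > 0"
  proof -
    have "W1 p0 \<noteq> 0 \<or> W2 p0 \<noteq> 0" using ne unfolding W1_def W2_def by (auto simp: prod_eq_iff)
    then have "W1 p0^2 + W2 p0^2 > 0" by (simp add: sum_power2_gt_zero_iff)
    moreover have "sqrt (NP u p0^2 + NQ u p0^2) > 0" using posu[OF p0S] by simp
    moreover have "sqrt (NP v p0^2 + NQ v p0^2) \<ge> 0" by simp
    ultimately show ?thesis unfolding Xeq[OF p0S]
      by (intro mult_pos_pos) (auto intro: add_pos_nonneg)
  qed
  define \<Phi> where "\<Phi> q = g' (u q - v q) * X q" for q
  have \<Phi>p0: "\<Phi> p0 > 0" unfolding \<Phi>_def D_def[symmetric] using g'p0 Xpos by simp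
  have \<Phi>cont: "isCont \<Phi> p0"
  proof -
    have cU: "isCont u p0" "isCont v p0" "isCont (px u) p0" "isCont (py u) p0" "isCont (px v) p0" "isCont (py v) p0"
      using regu[OF p0S] regv[OF p0S] differentiable_imp_continuous_within by auto
    have cN: "isCont (NP u) p0" "isCont (NQ u) p0" "isCont (NP v) p0" "isCont (NQ v) p0"
      unfolding NP_def[abs_def] NQ_def[abs_def] by (intro continuous_intros cU)+
    have s0: "sqrt (NP u p0^2 + NQ u p0^2) \<noteq> 0" "sqrt (NP v p0^2 + NQ v p0^2) \<noteq> 0"
      using posu[OF p0S] posv[OF p0S] by auto
    have g'at: "isCont g' t" for t using g'_cont continuous_on_eq_continuous_at by blast
    have cg: "isCont (\<lambda>q. g' (u q - v q)) p0"
      by (rule isCont_o2[OF _ g'at]) (intro continuous_intros cU)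
    have "isCont (\<lambda>q. g' (u q - v q) * ((px u q - px v q) * (NP u q / sqrt (NP u q^2 + NQ u q^2) - NP v q / sqrt (NP v q^2 + NQ v q^2))
        + (py u q - py v q) * (NQ u q / sqrt (NP u q^2 + NQ u q^2) - NQ v q / sqrt (NP v q^2 + NQ v q^2)))) p0"
      by (intro continuous_intros cg cU cN s0)
    moreover have "\<Phi> = (\<lambda>q. g' (u q - v q) * ((px u q - px v q) * (NP u q / sqrt (NP u q^2 + NQ u q^2) - NP v q / sqrt (NP v q^2 + NQ v q^2))
        + (py u q - py v q) * (NQ u q / sqrt (NP u q^2 + NQ u q^2) - NQ v q / sqrt (NP v q^2 + NQ v q^2))))"
      by (simp add: fun_eq_iff \<Phi>_def X_def W1_def W2_def N_fst_pt N_snd_pt)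
    ultimately show ?thesis by simp
  qed
  obtain \<delta> where \<delta>: "\<delta> > 0" "ball p0 \<delta> \<subseteq> \<Omega>" "\<And>q. dist q p0 < \<delta> \<Longrightarrow> \<Phi> q > \<Phi> p0 / 2"
  proof -
    obtain d where d: "d > 0" "\<And>q. dist q p0 < d \<Longrightarrow> dist (\<Phi> q) (\<Phi> p0) < \<Phi> p0 / 2"
      using \<Phi>cont \<Phi>p0 unfolding continuous_at_eps_delta by (meson half_gt_zero)
    obtain e where e: "e > 0" "ball p0 e \<subseteq> \<Omega>" using opn p0(1) open_contains_ball by blast
    show ?thesis
    proof (rule that[of "min d e"])
      show "min d e > 0" using d e by simp
      show "ball p0 (min d e) \<subseteq> \<Omega>" using e by auto
      fix q assume "dist q p0 < min d e"
      then have "dist (\<Phi> q) (\<Phi> p0) < \<Phi> p0 / 2" using d by simp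
      then show "\<Phi> q > \<Phi> p0 / 2" unfolding dist_real_def by linarith
    qed
  qed
  obtain x0 y0 where p0eq: "p0 = (x0, y0)" by (cases p0)
  define c where "c = \<Phi> p0 / 2"
  have c: "c > 0" using \<Phi>p0 c_def by simp
  define B0 where "B0 = cbox (x0 - \<delta>/4, y0 - \<delta>/4) (x0 + \<delta>/4, y0 + \<delta>/4)"
  have B0ball: "dist q p0 < \<delta>" if "q \<in> B0" for q
  proof -
    obtain x y where q: "q = (x, y)" by (cases q)
    have h: "x0 - \<delta>/4 \<le> x" "x \<le> x0 + \<delta>/4" "y0 - \<delta>/4 \<le> y" "y \<le> y0 + \<delta>/4"
      using that unfolding B0_def q by (auto simp: mem_box Basis_prod_def)
    have xy: "\<bar>x - x0\<bar> \<le> \<delta>/4" "\<bar>y - y0\<bar> \<le> \<delta>/4"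
      unfolding abs_le_iff using h by linarith+
    have "dist q p0 = sqrt ((dist x x0)^2 + (dist y y0)^2)" unfolding q p0eq by (simp add: dist_Pair_Pair)
    also have "\<dots> \<le> \<bar>dist x x0\<bar> + \<bar>dist y y0\<bar>" by (rule sqrt_sum_squares_le_sum_abs)
    also have "\<dots> \<le> \<delta>/2" using xy by (simp add: dist_real_def)
    also have "\<dots> < \<delta>" using \<delta>(1) by simp
    finally show ?thesis .
  qed
  have B0\<Omega>: "B0 \<subseteq> \<Omega>" using B0ball \<delta>(2) by (auto simp: dist_commute)
  have mB0: "measure lborel B0 = \<delta>/2 * (\<delta>/2)"
    using \<delta>(1) by (simp add: B0_def content_Pair)
  have mB0pos: "measure lborel B0 > 0" unfolding mB0 using \<delta>(1) by simp
  obtain M where M: "\<forall>x\<in>\<Omega>. norm x \<le> M" using bnd bounded_iff by blast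
  define Kb where "Kb = M + 1"
  have "norm p0 \<le> M" using M p0(1) by blast
  then have "0 \<le> M" using norm_ge_zero[of p0] by linarith
  then have Kb: "Kb > 0" unfolding Kb_def by simp
  have inbox: "q \<in> box (-Kb,-Kb) (Kb,Kb)" if "q \<in> \<Omega>" for q
  proof -
    obtain x y where q: "q = (x, y)" by (cases q)
    have "norm q \<le> M" using M that by blast
    then have "\<bar>x\<bar> < Kb" "\<bar>y\<bar> < Kb" unfolding q Kb_def
      using norm_fst_le[of x y] norm_snd_le[of y x] by auto
    then have "-Kb < x" "x < Kb" "-Kb < y" "y < Kb" unfolding abs_less_iff by linarith+
    then show ?thesis unfolding q by (auto simp: mem_box Basis_prod_def)
  qed
  define Bx where "Bx = cbox (-Kb,-Kb) (Kb,Kb)"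
  have B0Bx: "B0 \<subseteq> Bx"
  proof
    fix q assume "q \<in> B0"
    then have "q \<in> \<Omega>" using B0\<Omega> by blast
    then have "q \<in> box (-Kb,-Kb) (Kb,Kb)" by (rule inbox)
    then show "q \<in> Bx" unfolding Bx_def using box_subset_cbox by auto
  qed
  have cS: "compact (closure S)" using bounded_subset[OF bnd S\<Omega>] by (simp add: compact_closure)
  define s where "s = min 1 (c * measure lborel B0 / (2 * (16 * c + 288)))"
  have s: "s > 0" "s \<le> 1" using c mB0pos unfolding s_def by auto
  obtain F :: "nat set" and r a b :: "nat \<Rightarrow> real" where fin: "finite F" and rpos: "\<And>n. n \<in> F \<Longrightarrow> r n > 0" and rsum: "(\<Sum>n\<in>F. r n) \<le> s"
    and SU: "closure S \<subseteq> (\<Union>n\<in>F. box (a n - r n, b n - r n) (a n + r n, b n + r n))"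
  proof (rule hcover[OF H cS s(1)])
    fix F' and r' a' b' :: "nat \<Rightarrow> real"
    assume A: "finite F'" "\<And>n. n \<in> F' \<Longrightarrow> r' n > 0" "(\<Sum>n\<in>F'. r' n) \<le> s"
      "closure S \<subseteq> (\<Union>n\<in>F'. box (a' n - r' n, b' n - r' n) (a' n + r' n, b' n + r' n))"
    show thesis by (rule that[OF A])
  qed
  define U where "U = (\<Union>n\<in>F. box (a n - r n, b n - r n) (a n + r n, b n + r n))"
  have openU: "open U" unfolding U_def by (intro open_UN ballI open_box)
  define \<psi> where "\<psi> = psi F a b r"
  have \<psi>U: "\<psi> q = 0" if "q \<in> U" for q using that psi_zero[where F=F and r=r and a=a and b=b, OF fin rpos] unfolding U_def \<psi>_def by blast
  have SU': "closure S \<subseteq> U" using SU U_def by simp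
  have \<epsilon>: "\<epsilon> > 0" using D \<epsilon>_def by simp
  define \<phi> where "\<phi> q = g (u q - v q)" for q
  define Hf where "Hf q = (if q \<in> V then \<psi> q * \<phi> q else 0)" for q
  define G1 where "G1 q = Hf q * W1 q" for q
  define G2 where "G2 q = Hf q * W2 q" for q
  define Z where "Z = {q. \<exists>T. open T \<and> q \<in> T \<and> (\<forall>y\<in>T. Hf y = 0)}"
  have openZ: "open Z"
    unfolding open_subopen[of Z]
  proof
    fix q assume "q \<in> Z"
    then obtain T where T: "open T" "q \<in> T" "\<forall>y\<in>T. Hf y = 0" unfolding Z_def by blast
    then have "T \<subseteq> Z" unfolding Z_def by blast
    then show "\<exists>T. open T \<and> q \<in> T \<and> T \<subseteq> Z" using T by blast
  qed
  have cover: "q \<in> V \<or> q \<in> Z" for q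
  proof (cases "q \<in> V")
    case True then show ?thesis by simp
  next
    case False
    show ?thesis
    proof (cases "q \<in> U")
      case True
      have "\<forall>y\<in>U. Hf y = 0" using \<psi>U by (simp add: Hf_def)
      then have "q \<in> Z" unfolding Z_def using True openU by blast
      then show ?thesis by simp
    next
      case qU: False
      show ?thesis
      proof (cases "q \<in> closure \<Omega>")
        case qncl: False
        have "\<forall>y\<in> - closure \<Omega>. Hf y = 0" using closure_subset by (auto simp: Hf_def V_def)
        then have "q \<in> Z" unfolding Z_def using qncl by (intro CollectI exI[of _ "- closure \<Omega>"]) auto
        then show ?thesis by simp
      next
        case qcl: True
        have qS: "q \<notin> closure S" using qU SU' by blast
        then have "q \<notin> \<Omega>" using False V_def by auto
        then have qfr: "q \<in> frontier \<Omega>" using qcl opn by (simp add: frontier_def interior_open)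
        have qnS: "q \<notin> S" using qS closure_subset by blast
        have uv: "u q \<le> v q" using bdry qfr qnS by blast
        define T0 where "T0 = closure \<Omega> - S"
        have T01: "T0 \<subseteq> closure \<Omega> - S1" "T0 \<subseteq> closure \<Omega> - S2" using S1S unfolding T0_def by auto
        have qT0: "q \<in> closure \<Omega> - S1" "q \<in> closure \<Omega> - S2" using qcl qnS S1S by auto
        have cu0: "continuous (at q within T0) u"
          using cu qT0(1) T01(1) unfolding continuous_on_eq_continuous_within
          by (meson continuous_within_subset)
        have cv0: "continuous (at q within T0) v"
          using cv qT0(2) T01(2) unfolding continuous_on_eq_continuous_within
          by (meson continuous_within_subset)
        have "continuous (at q within T0) (\<lambda>y. u y - v y)" by (intro continuous_intros cu0 cv0)
        then obtain d where d: "d > 0" "\<And>y. y \<in> T0 \<Longrightarrow> dist y q < d \<Longrightarrow> dist (u y - v y) (u q - v q) < \<epsilon>"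
          using \<epsilon> unfolding continuous_within_eps_delta by metis
        have "\<forall>y\<in>ball q d. Hf y = 0"
        proof
          fix y assume y: "y \<in> ball q d"
          show "Hf y = 0"
          proof (cases "y \<in> V")
            case True
            then have "y \<in> T0" using VS closure_subset T0_def by auto
            moreover have "dist y q < d" using y by (simp add: dist_commute)
            ultimately have "dist (u y - v y) (u q - v q) < \<epsilon>" using d(2) by blast
            then have "u y - v y \<le> \<epsilon>" using uv unfolding dist_real_def by linarith
            then have "\<phi> y = 0" using g_zero \<phi>_def by simp
            then show ?thesis by (simp add: Hf_def)
          qed (simp add: Hf_def)
        qed
        then have "q \<in> Z" unfolding Z_def using d(1) by (intro CollectI exI[of _ "ball q d"]) auto
        then show ?thesis by simp
      qed
    qed
  qed
  have qVS: "q \<in> \<Omega> - S" if "q \<in> V" for q using VS that by blast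
  have d\<psi>: "\<psi> differentiable (at q)" for q
    unfolding \<psi>_def by (rule psi_diff[where F=F and r=r, OF fin rpos])
  have duv: "(\<lambda>y. u y - v y) differentiable (at q)" if "q \<in> V" for q
    using regu(1)[OF qVS[OF that]] regv(1)[OF qVS[OF that]] by (rule differentiable_diff)
  have d\<phi>: "\<phi> differentiable (at q)" if "q \<in> V" for q
    unfolding \<phi>_def[abs_def] by (rule fd_comp(2)[OF gder duv[OF that]])
  have fd\<phi>: "frechet_derivative \<phi> (at q) e = g' (u q - v q) * (frechet_derivative u (at q) e - frechet_derivative v (at q) e)"
    if "q \<in> V" for q e
    unfolding \<phi>_def[abs_def] fd_comp(1)[OF gder duv[OF that]]
      fd_diff[OF regu(1)[OF qVS[OF that]] regv(1)[OF qVS[OF that]]] ..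
  have dN: "(\<lambda>q. fst (Nfield u q)) differentiable (at q)" "(\<lambda>q. fst (Nfield v q)) differentiable (at q)"
     "(\<lambda>q. snd (Nfield u q)) differentiable (at q)" "(\<lambda>q. snd (Nfield v q)) differentiable (at q)"
    if "q \<in> V" for q
    using N1_diff[OF regu(2,3)[OF qVS[OF that]] posu[OF qVS[OF that]]]
      N1_diff[OF regv(2,3)[OF qVS[OF that]] posv[OF qVS[OF that]]]
      N2_diff[OF regu(2,3)[OF qVS[OF that]] posu[OF qVS[OF that]]]
      N2_diff[OF regv(2,3)[OF qVS[OF that]] posv[OF qVS[OF that]]] by auto
  have dW1: "W1 differentiable (at q)" if "q \<in> V" for q
    unfolding W1_def[abs_def] using dN[OF that] by (intro differentiable_diff) auto
  have dW2: "W2 differentiable (at q)" if "q \<in> V" for q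
    unfolding W2_def[abs_def] using dN[OF that] by (intro differentiable_diff) auto
  have fdW1: "frechet_derivative W1 (at q) e = frechet_derivative (\<lambda>q. fst (Nfield u q)) (at q) e - frechet_derivative (\<lambda>q. fst (Nfield v q)) (at q) e"
    if "q \<in> V" for q e
    unfolding W1_def[abs_def] by (rule fd_diff) (use dN[OF that] in auto)
  have fdW2: "frechet_derivative W2 (at q) e = frechet_derivative (\<lambda>q. snd (Nfield u q)) (at q) e - frechet_derivative (\<lambda>q. snd (Nfield v q)) (at q) e"
    if "q \<in> V" for q e
    unfolding W2_def[abs_def] by (rule fd_diff) (use dN[OF that] in auto)
  have G1V: "\<And>y. y \<in> V \<Longrightarrow> G1 y = \<psi> y * (\<phi> y * W1 y)" by (simp add: G1_def Hf_def)
  have G2V: "\<And>y. y \<in> V \<Longrightarrow> G2 y = \<psi> y * (\<phi> y * W2 y)" by (simp add: G2_def Hf_def)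
  have fdG1: "frechet_derivative G1 (at q) e = frechet_derivative \<psi> (at q) e * (\<phi> q * W1 q)
      + \<psi> q * (frechet_derivative \<phi> (at q) e * W1 q + \<phi> q * frechet_derivative W1 (at q) e)"
    and dG1V: "G1 differentiable (at q)" if "q \<in> V" for q e
  proof -
    have "frechet_derivative G1 (at q) = frechet_derivative (\<lambda>y. \<psi> y * (\<phi> y * W1 y)) (at q)"
      by (rule fd_local(1)[OF openV that G1V])
    then show "frechet_derivative G1 (at q) e = frechet_derivative \<psi> (at q) e * (\<phi> q * W1 q)
      + \<psi> q * (frechet_derivative \<phi> (at q) e * W1 q + \<phi> q * frechet_derivative W1 (at q) e)"
      using fd_mult[OF d\<psi> differentiable_mult[OF d\<phi>[OF that] dW1[OF that]]] fd_mult[OF d\<phi>[OF that] dW1[OF that]]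
      by simp
    show "G1 differentiable (at q)"
      using fd_local(2)[OF openV that G1V] d\<psi> d\<phi>[OF that] dW1[OF that] by simp
  qed
  have fdG2: "frechet_derivative G2 (at q) e = frechet_derivative \<psi> (at q) e * (\<phi> q * W2 q)
      + \<psi> q * (frechet_derivative \<phi> (at q) e * W2 q + \<phi> q * frechet_derivative W2 (at q) e)"
    and dG2V: "G2 differentiable (at q)" if "q \<in> V" for q e
  proof -
    have "frechet_derivative G2 (at q) = frechet_derivative (\<lambda>y. \<psi> y * (\<phi> y * W2 y)) (at q)"
      by (rule fd_local(1)[OF openV that G2V])
    then show "frechet_derivative G2 (at q) e = frechet_derivative \<psi> (at q) e * (\<phi> q * W2 q)
      + \<psi> q * (frechet_derivative \<phi> (at q) e * W2 q + \<phi> q * frechet_derivative W2 (at q) e)"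
      using fd_mult[OF d\<psi> differentiable_mult[OF d\<phi>[OF that] dW2[OF that]]] fd_mult[OF d\<phi>[OF that] dW2[OF that]]
      by simp
    show "G2 differentiable (at q)"
      using fd_local(2)[OF openV that G2V] d\<psi> d\<phi>[OF that] dW2[OF that] by simp
  qed
  have pxG1: "px G1 q = px \<psi> q * (\<phi> q * W1 q) + \<psi> q * (g' (u q - v q) * (px u q - px v q) * W1 q
      + \<phi> q * (px (\<lambda>q. fst (Nfield u q)) q - px (\<lambda>q. fst (Nfield v q)) q))" if "q \<in> V" for q
    unfolding px_def fdG1[OF that] fd\<phi>[OF that] fdW1[OF that] by simp
  have pyG2: "py G2 q = py \<psi> q * (\<phi> q * W2 q) + \<psi> q * (g' (u q - v q) * (py u q - py v q) * W2 q
      + \<phi> q * (py (\<lambda>q. snd (Nfield u q)) q - py (\<lambda>q. snd (Nfield v q)) q))" if "q \<in> V" for q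
    unfolding py_def fdG2[OF that] fd\<phi>[OF that] fdW2[OF that] by simp
  have Z0: "G1 differentiable (at q) \<and> G2 differentiable (at q) \<and> px G1 q = 0 \<and> py G2 q = 0" if "q \<in> Z" for q
  proof -
    have "\<exists>T. open T \<and> q \<in> T \<and> (\<forall>y\<in>T. Hf y = 0)" using that unfolding Z_def by simp
    then obtain T where T: "open T" "q \<in> T" "\<forall>y\<in>T. Hf y = 0" by blast
    have e1: "\<And>y. y \<in> T \<Longrightarrow> G1 y = (\<lambda>_. 0::real) y" and e2: "\<And>y. y \<in> T \<Longrightarrow> G2 y = (\<lambda>_. 0::real) y"
      using T(3) unfolding G1_def G2_def by simp_all
    have f1: "frechet_derivative G1 (at q) = frechet_derivative (\<lambda>_. 0::real) (at q)"
      and f2: "frechet_derivative G2 (at q) = frechet_derivative (\<lambda>_. 0::real) (at q)"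
      by (rule fd_local(1)[OF T(1,2)], use e1 e2 in simp)+
    have g1: "G1 differentiable (at q)" and g2: "G2 differentiable (at q)"
      by (subst fd_local(2)[OF T(1,2)], use e1 e2 in simp, simp)+
    have "px G1 q = 0" unfolding px_def f1 by (rule fd_const)
    moreover have "py G2 q = 0" unfolding py_def f2 by (rule fd_const)
    ultimately show ?thesis using g1 g2 by blast
  qed
  have dG1: "G1 differentiable (at q)" for q
  proof (cases "q \<in> V")
    case True then show ?thesis by (rule dG1V)
  next
    case False then have "q \<in> Z" using cover[of q] by simp
    then show ?thesis using Z0[of q] by simp
  qed
  have dG2: "G2 differentiable (at q)" for q
  proof (cases "q \<in> V")
    case True then show ?thesis by (rule dG2V)
  next
    case False then have "q \<in> Z" using cover[of q] by simp
    then show ?thesis using Z0[of q] by simp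
  qed
  have cu1: "continuous_on V u" "continuous_on V v" "continuous_on V (px u)" "continuous_on V (py u)"
    "continuous_on V (px v)" "continuous_on V (py v)" "continuous_on V \<psi>"
          apply (rule diff_cont_on, rule regu(1), erule qVS)
         apply (rule diff_cont_on, rule regv(1), erule qVS)
        apply (rule diff_cont_on, rule regu(2), erule qVS)
       apply (rule diff_cont_on, rule regu(3), erule qVS)
      apply (rule diff_cont_on, rule regv(2), erule qVS)
     apply (rule diff_cont_on, rule regv(3), erule qVS)
    apply (rule diff_cont_on, rule d\<psi>)
    done
  have C2u': "continuous_on (\<Omega> - S) (px (px u))" "continuous_on (\<Omega> - S) (py (px u))"
     "continuous_on (\<Omega> - S) (px (py u))" "continuous_on (\<Omega> - S) (py (py u))"
    using C2u unfolding C2_on_def by simp_all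
  have C2v': "continuous_on (\<Omega> - S) (px (px v))" "continuous_on (\<Omega> - S) (py (px v))"
     "continuous_on (\<Omega> - S) (px (py v))" "continuous_on (\<Omega> - S) (py (py v))"
    using C2v unfolding C2_on_def by simp_all
  have c2: "continuous_on V (px (px u))" "continuous_on V (py (px u))" "continuous_on V (px (py u))" "continuous_on V (py (py u))"
    "continuous_on V (px (px v))" "continuous_on V (py (px v))" "continuous_on V (px (py v))" "continuous_on V (py (py v))"
    using continuous_on_subset[OF C2u'(1) VS] continuous_on_subset[OF C2u'(2) VS]
      continuous_on_subset[OF C2u'(3) VS] continuous_on_subset[OF C2u'(4) VS]
      continuous_on_subset[OF C2v'(1) VS] continuous_on_subset[OF C2v'(2) VS]
      continuous_on_subset[OF C2v'(3) VS] continuous_on_subset[OF C2v'(4) VS] by auto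
  have cN: "continuous_on V (NP u)" "continuous_on V (NQ u)" "continuous_on V (NP v)" "continuous_on V (NQ v)"
    unfolding NP_def[abs_def] NQ_def[abs_def] by (intro continuous_intros cu1)+
  have sq0: "\<forall>q\<in>V. sqrt (NP u q^2 + NQ u q^2) \<noteq> 0" "\<forall>q\<in>V. sqrt (NP v q^2 + NQ v q^2) \<noteq> 0"
  proof -
    show "\<forall>q\<in>V. sqrt (NP u q^2 + NQ u q^2) \<noteq> 0"
    proof
      fix q assume "q \<in> V"
      then have "sqrt (NP u q^2 + NQ u q^2) > 0" using posu[OF qVS] real_sqrt_gt_zero by blast
      then show "sqrt (NP u q^2 + NQ u q^2) \<noteq> 0" by linarith
    qed
    show "\<forall>q\<in>V. sqrt (NP v q^2 + NQ v q^2) \<noteq> 0"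
    proof
      fix q assume "q \<in> V"
      then have "sqrt (NP v q^2 + NQ v q^2) > 0" using posv[OF qVS] real_sqrt_gt_zero by blast
      then show "sqrt (NP v q^2 + NQ v q^2) \<noteq> 0" by linarith
    qed
  qed
  have W1eq: "W1 = (\<lambda>q. NP u q / sqrt (NP u q^2 + NQ u q^2) - NP v q / sqrt (NP v q^2 + NQ v q^2))"
    unfolding W1_def[abs_def] N_fst_pt ..
  have W2eq: "W2 = (\<lambda>q. NQ u q / sqrt (NP u q^2 + NQ u q^2) - NQ v q / sqrt (NP v q^2 + NQ v q^2))"
    unfolding W2_def[abs_def] N_snd_pt ..
  have cW: "continuous_on V W1" "continuous_on V W2"
    unfolding W1eq W2eq using sq0 by (intro continuous_intros cN; auto)+
  have c\<phi>: "continuous_on V \<phi>" unfolding \<phi>_def[abs_def]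
    by (rule continuous_on_compose2[OF g_cont]) (intro continuous_intros cu1, auto)
  have cg': "continuous_on V (\<lambda>q. g' (u q - v q))"
    by (rule continuous_on_compose2[OF g'_cont]) (intro continuous_intros cu1, auto)
  have cp\<psi>: "continuous_on V (px \<psi>)" "continuous_on V (py \<psi>)"
    unfolding \<psi>_def using px_psi_cont[where F=F and r=r, OF fin rpos] py_psi_cont[where F=F and r=r, OF fin rpos]
    by (meson continuous_on_subset subset_UNIV)+
  have posuV: "\<forall>q\<in>V. NP u q^2 + NQ u q^2 > 0" and posvV: "\<forall>q\<in>V. NP v q^2 + NQ v q^2 > 0"
    using posu posv qVS by blast+
  have posuV': "\<forall>q\<in>V. NQ u q^2 + NP u q^2 > 0" and posvV': "\<forall>q\<in>V. NQ v q^2 + NP v q^2 > 0"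
    using posuV posvV by (simp_all add: add.commute)
  have cNF: "continuous_on V (\<lambda>q. NF (NP u q) (NQ u q) (px (px u) q) (px (py u) q + 1))"
    "continuous_on V (\<lambda>q. NF (NP v q) (NQ v q) (px (px v) q) (px (py v) q + 1))"
    "continuous_on V (\<lambda>q. NF (NQ u q) (NP u q) (py (py u) q) (py (px u) q - 1))"
    "continuous_on V (\<lambda>q. NF (NQ v q) (NP v q) (py (py v) q) (py (px v) q - 1))"
    by (rule NF_cont; (intro continuous_intros cN c2)?; use posuV posvV posuV' posvV' in simp)+
  have cpxG1V: "continuous_on V (px G1)"
  proof -
    have "continuous_on V (\<lambda>q. px \<psi> q * (\<phi> q * W1 q) + \<psi> q * (g' (u q - v q) * (px u q - px v q) * W1 q
      + \<phi> q * (NF (NP u q) (NQ u q) (px (px u) q) (px (py u) q + 1) - NF (NP v q) (NQ v q) (px (px v) q) (px (py v) q + 1))))"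
      by (intro continuous_intros cp\<psi> c\<phi> cW cg' cu1 cNF)
    then show ?thesis
    proof (rule continuous_on_eq)
      fix q assume q: "q \<in> V"
      show "px \<psi> q * (\<phi> q * W1 q) + \<psi> q * (g' (u q - v q) * (px u q - px v q) * W1 q
      + \<phi> q * (NF (NP u q) (NQ u q) (px (px u) q) (px (py u) q + 1) - NF (NP v q) (NQ v q) (px (px v) q) (px (py v) q + 1))) = px G1 q"
        unfolding pxG1[OF q] px_N1[OF regu(2,3)[OF qVS[OF q]] posu[OF qVS[OF q]]]
          px_N1[OF regv(2,3)[OF qVS[OF q]] posv[OF qVS[OF q]]] ..
    qed
  qed
  have cpyG2V: "continuous_on V (py G2)"
  proof -
    have "continuous_on V (\<lambda>q. py \<psi> q * (\<phi> q * W2 q) + \<psi> q * (g' (u q - v q) * (py u q - py v q) * W2 q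
      + \<phi> q * (NF (NQ u q) (NP u q) (py (py u) q) (py (px u) q - 1) - NF (NQ v q) (NP v q) (py (py v) q) (py (px v) q - 1))))"
      by (intro continuous_intros cp\<psi> c\<phi> cW cg' cu1 cNF)
    then show ?thesis
    proof (rule continuous_on_eq)
      fix q assume q: "q \<in> V"
      show "py \<psi> q * (\<phi> q * W2 q) + \<psi> q * (g' (u q - v q) * (py u q - py v q) * W2 q
      + \<phi> q * (NF (NQ u q) (NP u q) (py (py u) q) (py (px u) q - 1) - NF (NQ v q) (NP v q) (py (py v) q) (py (px v) q - 1))) = py G2 q"
        unfolding pyG2[OF q] py_N2[OF regu(2,3)[OF qVS[OF q]] posu[OF qVS[OF q]]]
          py_N2[OF regv(2,3)[OF qVS[OF q]] posv[OF qVS[OF q]]] ..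
    qed
  qed
  have VZ: "V \<union> Z = UNIV" using cover by blast
  have cpxG1: "continuous_on UNIV (px G1)"
  proof -
    have "continuous_on Z (px G1)"
      by (rule continuous_on_eq[OF continuous_on_const[of Z 0]]) (use Z0 in simp)
    then have "continuous_on (V \<union> Z) (px G1)" using cpxG1V openV openZ by (intro continuous_on_open_Un)
    then show ?thesis using VZ by simp
  qed
  have cpyG2: "continuous_on UNIV (py G2)"
  proof -
    have "continuous_on Z (py G2)"
      by (rule continuous_on_eq[OF continuous_on_const[of Z 0]]) (use Z0 in simp)
    then have "continuous_on (V \<union> Z) (py G2)" using cpyG2V openV openZ by (intro continuous_on_open_Un)
    then show ?thesis using VZ by simp
  qed
  have G0: "\<forall>q. q \<notin> box (-Kb,-Kb) (Kb,Kb) \<longrightarrow> G1 q = 0 \<and> G2 q = 0"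
  proof (intro allI impI)
    fix q assume "q \<notin> box (-Kb,-Kb) (Kb,Kb)"
    then have "q \<notin> V" using inbox V_def by blast
    then show "G1 q = 0 \<and> G2 q = 0" by (simp add: G1_def G2_def Hf_def)
  qed
  have int0: "integral Bx (\<lambda>q. px G1 q + py G2 q) = 0"
  proof -
    have "integral Bx (px G1) = 0" unfolding Bx_def
      by (rule div_box_x[OF Kb]) (use dG1 cpxG1 G0 in auto)
    moreover have "integral Bx (py G2) = 0" unfolding Bx_def
      by (rule div_box_y[OF Kb]) (use dG2 cpyG2 G0 in auto)
    moreover have "px G1 integrable_on Bx" "py G2 integrable_on Bx" unfolding Bx_def
      by (rule integrable_continuous, rule continuous_on_subset[OF cpxG1], simp)
         (rule integrable_continuous, rule continuous_on_subset[OF cpyG2], simp)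
    ultimately show ?thesis by (simp add: integral_add)
  qed
  define e where "e = ee F a b r"
  define bq where "bq = bb F a b r"
  have e_nn: "0 \<le> e q" for q unfolding e_def by (rule ee_nonneg[where F=F and r=r, OF fin rpos])
  have b_nn: "0 \<le> bq q" for q unfolding bq_def by (rule bb_nonneg[where F=F and r=r, OF fin rpos])
  have e_ge: "1 \<le> e q" if "\<psi> q \<noteq> 1" for q
  proof -
    have "psi F a b r q \<noteq> 1" using that unfolding \<psi>_def .
    then show ?thesis unfolding e_def using ee_ge[where F=F and r=r, OF fin rpos] by blast
  qed
  have grad: "\<bar>px \<psi> q\<bar> + \<bar>py \<psi> q\<bar> \<le> bq q" for q
    unfolding bq_def \<psi>_def by (rule grad_bound[where F=F and r=r, OF fin rpos])
  have \<psi>b: "0 \<le> \<psi> q" "\<psi> q \<le> 1" for q unfolding \<psi>_def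
    using psi_bounds[where F=F and r=r, OF fin rpos] by auto
  define L where "L q = c * indicator B0 q - c * e q - 2 * bq q" for q
  have ind01: "0 \<le> (indicator B0 q :: real)" "(indicator B0 q :: real) \<le> 1" for q by (auto simp: indicator_def)
  have lower: "L q \<le> px G1 q + py G2 q" for q
  proof (cases "q \<in> V")
    case True
    have qS: "q \<in> \<Omega> - S" using qVS[OF True] .
    have divq: "px (\<lambda>q. fst (Nfield v q)) q + py (\<lambda>q. snd (Nfield v q)) q
        \<le> px (\<lambda>q. fst (Nfield u q)) q + py (\<lambda>q. snd (Nfield u q)) q"
      using divge qS unfolding div2_def by blast
    have sum: "px G1 q + py G2 q = \<phi> q * (px \<psi> q * W1 q + py \<psi> q * W2 q) + \<psi> q * (g' (u q - v q) * X q)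
      + \<psi> q * \<phi> q * ((px (\<lambda>q. fst (Nfield u q)) q + py (\<lambda>q. snd (Nfield u q)) q)
           - (px (\<lambda>q. fst (Nfield v q)) q + py (\<lambda>q. snd (Nfield v q)) q))"
      unfolding pxG1[OF True] pyG2[OF True] X_def by (simp add: algebra_simps)
    have t3: "0 \<le> \<psi> q * \<phi> q * ((px (\<lambda>q. fst (Nfield u q)) q + py (\<lambda>q. snd (Nfield u q)) q)
           - (px (\<lambda>q. fst (Nfield v q)) q + py (\<lambda>q. snd (Nfield v q)) q))"
      using divq \<psi>b[of q] g_bounds[of "u q - v q"] unfolding \<phi>_def by (intro mult_nonneg_nonneg) auto
    have t2: "0 \<le> \<psi> q * (g' (u q - v q) * X q)"
      using Xnonneg[OF qS] g'_nonneg[of "u q - v q"] \<psi>b[of q] by (intro mult_nonneg_nonneg) auto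
    have W12: "\<bar>W1 q\<bar> \<le> 2" "\<bar>W2 q\<bar> \<le> 2"
    proof -
      note nu = Nprops[OF posu[OF qS]] and nv = Nprops[OF posv[OF qS]]
      show "\<bar>W1 q\<bar> \<le> 2" unfolding W1_def using nu(5) nv(5) by linarith
      show "\<bar>W2 q\<bar> \<le> 2" unfolding W2_def using nu(6) nv(6) by linarith
    qed
    have t1: "-2 * bq q \<le> \<phi> q * (px \<psi> q * W1 q + py \<psi> q * W2 q)"
    proof -
      have p01: "0 \<le> \<phi> q" "\<phi> q \<le> 1" using g_bounds unfolding \<phi>_def by auto
      have "\<bar>px \<psi> q * W1 q\<bar> \<le> \<bar>px \<psi> q\<bar> * 2" unfolding abs_mult using W12
        by (intro mult_left_mono) auto
      moreover have "\<bar>py \<psi> q * W2 q\<bar> \<le> \<bar>py \<psi> q\<bar> * 2" unfolding abs_mult using W12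
        by (intro mult_left_mono) auto
      ultimately have A: "\<bar>px \<psi> q * W1 q + py \<psi> q * W2 q\<bar> \<le> 2 * bq q" using grad[of q] by linarith
      have "\<bar>\<phi> q * (px \<psi> q * W1 q + py \<psi> q * W2 q)\<bar> \<le> \<bar>px \<psi> q * W1 q + py \<psi> q * W2 q\<bar>"
        unfolding abs_mult using p01 by (intro mult_left_le_one_le) auto
      then have h: "\<bar>\<phi> q * (px \<psi> q * W1 q + py \<psi> q * W2 q)\<bar> \<le> 2 * bq q" using A by (rule order_trans)
      show ?thesis using abs_le_D2[OF h] by linarith
    qed
    show ?thesis
    proof (cases "\<psi> q = 1 \<and> q \<in> B0")
      case True
      then have "dist q p0 < \<delta>" using B0ball by blast
      then have "\<Phi> q > \<Phi> p0 / 2" by (rule \<delta>(3))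
      then have "\<Phi> q > c" using c_def by simp
      then have "\<psi> q * (g' (u q - v q) * X q) \<ge> c" using True \<Phi>_def by simp
      moreover have "L q \<le> c - 2 * bq q" unfolding L_def using e_nn[of q] c ind01[of q]
        by (smt (verit) mult_left_le mult_nonneg_nonneg)
      ultimately show ?thesis using sum t1 t3 by linarith
    next
      case False
      have "L q \<le> - 2 * bq q"
      proof (cases "\<psi> q = 1")
        case True
        then have "q \<notin> B0" using False by simp
        have "0 \<le> c * e q" using e_nn[of q] c by simp
        then show ?thesis unfolding L_def using \<open>q \<notin> B0\<close> by simp
      next
        case False
        then have "1 \<le> e q" by (rule e_ge)
        then have "c * 1 \<le> c * e q" using c by (intro mult_left_mono) auto
        moreover have "c * indicator B0 q \<le> c * 1" using c ind01[of q] by (intro mult_left_mono) auto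
        ultimately show ?thesis unfolding L_def by linarith
      qed
      then show ?thesis using sum t1 t2 t3 by linarith
    qed
  next
    case False
    then have qZ: "q \<in> Z" using cover by blast
    then have z: "px G1 q + py G2 q = 0" using Z0 by simp
    have "L q \<le> 0"
    proof (cases "q \<in> B0")
      case True
      then have "q \<in> \<Omega>" using B0\<Omega> by blast
      then have "q \<in> closure S" using False V_def by blast
      then have "\<psi> q = 0" using SU' \<psi>U by blast
      then have "1 \<le> e q" using e_ge by simp
      then have "c * 1 \<le> c * e q" using c by (intro mult_left_mono) auto
      moreover have "c * indicator B0 q \<le> c * 1" using c ind01[of q] by (intro mult_left_mono) auto
      ultimately show ?thesis unfolding L_def using b_nn[of q] by linarith
    next
      case False
      have "0 \<le> c * e q" using e_nn[of q] c by simp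
      then show ?thesis unfolding L_def using False b_nn[of q] by simp
    qed
    then show ?thesis using z by simp
  qed
  have intdiv: "(\<lambda>q. px G1 q + py G2 q) integrable_on Bx"
    unfolding Bx_def by (rule integrable_continuous) (intro continuous_intros continuous_on_subset[OF cpxG1] continuous_on_subset[OF cpyG2], auto)
  have indB0: "(indicator B0 :: real*real \<Rightarrow> real) integrable_on Bx" "integral Bx (indicator B0 :: real*real \<Rightarrow> real) = measure lborel B0"
  proof -
    have eq: "(indicator B0 :: real*real \<Rightarrow> real) = (\<lambda>x. if x \<in> B0 then 1 else 0)"
      by (auto simp: indicator_def)
    have BB: "B0 \<inter> Bx = B0" using B0Bx by blast
    show "(indicator B0 :: real*real \<Rightarrow> real) integrable_on Bx"
      unfolding eq integrable_restrict_Int BB unfolding B0_def by (rule integrable_const)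
    show "integral Bx (indicator B0 :: real*real \<Rightarrow> real) = measure lborel B0"
      unfolding eq integral_restrict_Int BB unfolding B0_def by simp
  qed
  have ie: "e integrable_on Bx" "integral Bx e \<le> (\<Sum>n\<in>F. 16 * (r n)^2)"
    unfolding e_def Bx_def using ee_int[where F=F and r=r, OF fin rpos] by auto
  have ib: "bq integrable_on Bx" "integral Bx bq \<le> (\<Sum>n\<in>F. 144 * r n)"
    unfolding bq_def Bx_def using bb_int[where F=F and r=r, OF fin rpos] by auto
  have intL: "L integrable_on Bx" unfolding L_def[abs_def]
    by (intro integrable_diff intble_cmul_real indB0(1) ie(1) ib(1))
  have intLv: "integral Bx L = c * measure lborel B0 - c * integral Bx e - 2 * integral Bx bq"
    unfolding L_def[abs_def]
    by (simp add: integral_diff intble_cmul_real indB0 ie(1) ib(1) int_cmul_real integrable_diff)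
  have "integral Bx L \<le> integral Bx (\<lambda>q. px G1 q + py G2 q)"
    by (rule integral_le[OF intL intdiv]) (rule lower)
  then have main: "c * measure lborel B0 - c * integral Bx e - 2 * integral Bx bq \<le> 0"
    using intLv int0 by simp
  have rle: "r n \<le> s" if "n \<in> F" for n
  proof -
    have "r n \<le> sum r F" by (rule member_le_sum[OF that _ fin]) (simp add: rpos less_imp_le)
    then show ?thesis using rsum by linarith
  qed
  have "(\<Sum>n\<in>F. 16 * (r n)^2) \<le> (\<Sum>n\<in>F. 16 * r n)"
  proof (rule sum_mono)
    fix n assume n: "n \<in> F"
    have "r n * r n \<le> r n * 1" using rle[OF n] s(2) rpos[OF n] by (intro mult_left_mono) auto
    then show "16 * (r n)^2 \<le> 16 * r n" by (simp add: power2_eq_square)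
  qed
  also have "\<dots> \<le> 16 * s" using rsum by (simp add: sum_distrib_left[symmetric])
  finally have E: "integral Bx e \<le> 16 * s" using ie(2) by linarith
  have "(\<Sum>n\<in>F. 144 * r n) \<le> 144 * s" using rsum by (simp add: sum_distrib_left[symmetric])
  then have Bq: "integral Bx bq \<le> 144 * s" using ib(2) by linarith
  have "c * integral Bx e \<le> c * (16 * s)" using E c by (intro mult_left_mono) auto
  then have "c * measure lborel B0 \<le> (16 * c + 288) * s" using main Bq by (simp add: algebra_simps)
  moreover have "(16 * c + 288) * s \<le> c * measure lborel B0 / 2"
  proof -
    have "s \<le> c * measure lborel B0 / (2 * (16 * c + 288))" unfolding s_def by simp
    then have "s * (2 * (16 * c + 288)) \<le> c * measure lborel B0" using c by (simp add: pos_le_divide_eq)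
    then show ?thesis by (simp add: algebra_simps)
  qed
  moreover have "c * measure lborel B0 > 0" using c mB0pos by simp
  ultimately show False by linarith
qed

end
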